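(* Let $\Gamma$ be a connected graph of rank $r$ and let $f:\Gamma\to\Gamma$ be an irreducible graph map which is a homotopy equivalence and which has a fold decomposition consisting of a single fold. Then $\Gamma$ is isomorphic to one of $R_r$, $\Delta_k^-$ or $\Delta_k^+$ for some $k\ge 2$. In particular: (i) if $r\equiv 0\pmod 3$ then $\Gamma\cong R_r$ or $\Gamma\cong\Delta_k^-$ (with $3k-3=r$); (ii) if $r\equiv 1\pmod 3$ then $\Gamma\cong R_r$; (iii) if $r\equiv 2\pmod 3$ then $\Gamma\cong R_r$ or $\Gamma\cong\Delta_k^+$ (with $3k-1=r$).
   Context: A graph $\Gamma$ is a finite 1-dimensional CW complex (multiple edges and loops allowed) with a chosen orientation on each edge; $\mathcal{V}\Gamma$, $\mathcal{E}\Gamma$, $\mathcal{E}^{\pm}\Gamma$ denote vertices, edges, and edges with both orientations; $\bar e$ is the reverse of $e$ and $\iota(e),\tau(e)$ its initial/terminal vertices. The rank of a connected graph is $|\mathcal{E}\Gamma|-|\mathcal{V}\Gamma|+1$. An edge path is a nonempty concatenation $e_1\cdots e_k$ of oriented edges with $\tau(e_i)=\iota(e_{i+1})$; it traverses $e$ if $e$ or $\bar e$ occurs in it. A graph map $f:\Gamma_1\to\Gamma_2$ consists of a vertex map $f_V$ and an edge path $f(e)$ for each $e\in\mathcal{E}^\pm\Gamma_1$ with $\iota(f(e))=f_V(\iota(e))$ and $f(\bar e)=\overline{f(e)}$; it is regarded as a continuous map. A graph isomorphism is a graph map with $f_V$ bijective and restricting to a bijection from $\mathcal{E}^\pm\Gamma_1$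 onto the single edges $\mathcal{E}^\pm\Gamma_2$. The transition matrix $T(f)$ of a self map has $(i,j)$ entry the number of times $f(e_i)$ traverses $e_j$; $f$ is irreducible if $T(f)$ is an irreducible matrix and every vertex of $\Gamma$ has valence at least $3$. Folds: for distinct oriented edges $e_0,e_1$ with $e_1\neq\bar e_0$ and $\iota(e_0)=\iota(e_1)$: the proper full fold of $e_1$ over $e_0$ subdivides $e_1=e_1''e_1'$ and identifies $e_1''$ with $e_0$ (map $e_1\mapsto e_0e_1'$, other edges fixed); the complete fold identifies $e_0$ and $e_1$ entirely; the partial fold subdivides $e_0=e_0'e_0''$, $e_1=e_1''e_1'$ and identifies $e_1''$ with $e_0'$. A fold decomposition with $m$ folds is an expression $f=h\circ f_m\circ\cdots\circ f_1$ with $\Gamma_1=\Gamma$, each $f_i:\Gamma_i\to\Gamma_{i+1}$ a fold, and $h:\Gamma_{m+1}\to\Gamma$ a graph isomorphism. Graphs: the $s$-gonal graph of depth $k$, $P_{s,k}$, has vertices $v_0,\dots,v_{s-1}$ and edges $e_i^j$ ($0\le i\le s-1$, $1\le j\le k$) with $e_i^j$ joining $v_i$ to $v_{i+1}$ (indices mod $s$). The rose $R_r=P_{1,r}$ is one vertex with $r$ loops. $\Delta_k^-$ is $P_{3,k}$ with one edge removed (rank $3k-3$); $\Delta_k^+$ is $P_{3,k+1}$ with two edges from two distinct sides $\{e_i^j:1\le j\le k+1\}$ removed (rank $3k-1$). *)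

theory Defs
  imports "HOL-Analysis.Analysis"
begin

record graph =
  verts :: "nat set"
  edges :: "nat set"
  src :: "nat \<Rightarrow> nat"
  tgt :: "nat \<Rightarrow> nat"

definition wf_graph :: "graph \<Rightarrow> bool" where
  "wf_graph G \<longleftrightarrow> finite (verts G) \<and> finite (edges G) \<and>
     (\<forall>e\<in>edges G. src G e \<in> verts G \<and> tgt G e \<in> verts G)"

text \<open>Oriented edges: (e, True) is e with its chosen orientation, (e, False) is its reverse.\<close>

type_synonym oedge = "nat \<times> bool"

definition oedges :: "graph \<Rightarrow> oedge set" where
  "oedges G = edges G \<times> UNIV"

definition orev :: "oedge \<Rightarrow> oedge" where
  "orev x = (fst x, \<not> snd x)"

definition oinit :: "graph \<Rightarrow> oedge \<Rightarrow> nat" where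
  "oinit G x = (if snd x then src G (fst x) else tgt G (fst x))"

definition oterm :: "graph \<Rightarrow> oedge \<Rightarrow> nat" where
  "oterm G x = oinit G (orev x)"

definition is_path :: "graph \<Rightarrow> oedge list \<Rightarrow> bool" where
  "is_path G p \<longleftrightarrow> p \<noteq> [] \<and> set p \<subseteq> oedges G \<and>
     (\<forall>i. Suc i < length p \<longrightarrow> oterm G (p ! i) = oinit G (p ! Suc i))"

definition rev_path :: "oedge list \<Rightarrow> oedge list" where
  "rev_path p = rev (map orev p)"

definition connected_graph :: "graph \<Rightarrow> bool" where
  "connected_graph G \<longleftrightarrow> verts G \<noteq> {} \<and>
     (\<forall>u\<in>verts G. \<forall>v\<in>verts G. u = v \<or>
        (\<exists>p. is_path G p \<and> oinit G (hd p) = u \<and> oterm G (last p) = v))"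

definition rank :: "graph \<Rightarrow> int" where
  "rank G = int (card (edges G)) - int (card (verts G)) + 1"

definition valence :: "graph \<Rightarrow> nat \<Rightarrow> nat" where
  "valence G v = card {x \<in> oedges G. oinit G x = v}"

record gmap =
  vmap :: "nat \<Rightarrow> nat"
  emap :: "oedge \<Rightarrow> oedge list"

definition graph_map :: "graph \<Rightarrow> graph \<Rightarrow> gmap \<Rightarrow> bool" where
  "graph_map G H f \<longleftrightarrow> (\<forall>v\<in>verts G. vmap f v \<in> verts H) \<and>
     (\<forall>x\<in>oedges G. is_path H (emap f x) \<and> oinit H (hd (emap f x)) = vmap f (oinit G x)
        \<and> emap f (orev x) = rev_path (emap f x))"

definition gcomp :: "gmap \<Rightarrow> gmap \<Rightarrow> gmap" where
  "gcomp g f = \<lparr>vmap = vmap g \<circ> vmap f, emap = (\<lambda>x. concat (map (emap g) (emap f x)))\<rparr>"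

definition map_eq :: "graph \<Rightarrow> gmap \<Rightarrow> gmap \<Rightarrow> bool" where
  "map_eq G f g \<longleftrightarrow> (\<forall>v\<in>verts G. vmap f v = vmap g v) \<and> (\<forall>x\<in>oedges G. emap f x = emap g x)"

definition graph_iso :: "graph \<Rightarrow> graph \<Rightarrow> gmap \<Rightarrow> bool" where
  "graph_iso G H h \<longleftrightarrow> graph_map G H h \<and> bij_betw (vmap h) (verts G) (verts H) \<and>
     (\<forall>x\<in>oedges G. length (emap h x) = 1) \<and>
     bij_betw (\<lambda>x. hd (emap h x)) (oedges G) (oedges H)"

definition isomorphic :: "graph \<Rightarrow> graph \<Rightarrow> bool" where
  "isomorphic G H \<longleftrightarrow> (\<exists>h. graph_iso G H h)"

definition trans_mat :: "gmap \<Rightarrow> nat \<Rightarrow> nat \<Rightarrow> nat" where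
  "trans_mat f i j = count_list (emap f (i, True)) (j, True) + count_list (emap f (i, True)) (j, False)"

fun mat_pow :: "nat set \<Rightarrow> (nat \<Rightarrow> nat \<Rightarrow> nat) \<Rightarrow> nat \<Rightarrow> nat \<Rightarrow> nat \<Rightarrow> nat" where
  "mat_pow I A 0 = (\<lambda>i j. if i = j then 1 else 0)"
| "mat_pow I A (Suc n) = (\<lambda>i j. \<Sum>k\<in>I. mat_pow I A n i k * A k j)"

definition irreducible_matrix :: "nat set \<Rightarrow> (nat \<Rightarrow> nat \<Rightarrow> nat) \<Rightarrow> bool" where
  "irreducible_matrix I A \<longleftrightarrow> (\<forall>i\<in>I. \<forall>j\<in>I. \<exists>m>0. mat_pow I A m i j > 0)"

definition irreducible_map :: "graph \<Rightarrow> gmap \<Rightarrow> bool" where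
  "irreducible_map G f \<longleftrightarrow> irreducible_matrix (edges G) (trans_mat f) \<and>
     (\<forall>v\<in>verts G. valence G v \<ge> 3)"

text \<open>Vertex v is realized as the unit vector at coordinate (0,v); edge e as the polygonal
  arc src e -> (1,e) -> (2,e) -> tgt e in the product space of real-valued functions on
  nat x nat (product topology). Loops become triangles, so the realization is homeomorphic
  to the CW complex.\<close>

definition unitv :: "nat \<times> nat \<Rightarrow> (nat \<times> nat \<Rightarrow> real)" where
  "unitv i = (\<lambda>j. if j = i then 1 else 0)"

definition seg :: "(nat \<times> nat \<Rightarrow> real) \<Rightarrow> (nat \<times> nat \<Rightarrow> real) \<Rightarrow> real \<Rightarrow> (nat \<times> nat \<Rightarrow> real)" where
  "seg a b s = (\<lambda>j. (1 - s) * a j + s * b j)"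

definition epoint :: "graph \<Rightarrow> nat \<Rightarrow> real \<Rightarrow> (nat \<times> nat \<Rightarrow> real)" where
  "epoint G e t =
     (if t \<le> 1/3 then seg (unitv (0, src G e)) (unitv (1, e)) (3 * t)
      else if t \<le> 2/3 then seg (unitv (1, e)) (unitv (2, e)) (3 * t - 1)
      else seg (unitv (2, e)) (unitv (0, tgt G e)) (3 * t - 2))"

definition opoint :: "graph \<Rightarrow> oedge \<Rightarrow> real \<Rightarrow> (nat \<times> nat \<Rightarrow> real)" where
  "opoint G x s = epoint G (fst x) (if snd x then s else 1 - s)"

definition ppoint :: "graph \<Rightarrow> oedge list \<Rightarrow> real \<Rightarrow> (nat \<times> nat \<Rightarrow> real)" where
  "ppoint G p t = (let k = length p; i = min (k - 1) (nat \<lfloor>real k * t\<rfloor>)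
                   in opoint G (p ! i) (real k * t - real i))"

definition realization :: "graph \<Rightarrow> (nat \<times> nat \<Rightarrow> real) set" where
  "realization G = (\<lambda>v. unitv (0, v)) ` verts G \<union> (\<Union>e\<in>edges G. epoint G e ` {0..1})"

definition real_top :: "graph \<Rightarrow> (nat \<times> nat \<Rightarrow> real) topology" where
  "real_top G = subtopology (powertop_real UNIV) (realization G)"

definition real_map :: "graph \<Rightarrow> graph \<Rightarrow> gmap \<Rightarrow> (nat \<times> nat \<Rightarrow> real) \<Rightarrow> (nat \<times> nat \<Rightarrow> real)" where
  "real_map G H f x = (SOME y.
      (\<exists>v\<in>verts G. x = unitv (0, v) \<and> y = unitv (0, vmap f v)) \<or>
      (\<exists>e\<in>edges G. \<exists>t\<in>{0..1}. x = epoint G e t \<and> y = ppoint H (emap f (e, True)) t))"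

definition homotopy_equivalence :: "graph \<Rightarrow> graph \<Rightarrow> gmap \<Rightarrow> bool" where
  "homotopy_equivalence G H f \<longleftrightarrow>
     (let F = real_map G H f in
      continuous_map (real_top G) (real_top H) F \<and>
      (\<exists>g. continuous_map (real_top H) (real_top G) g \<and>
           homotopic_with (\<lambda>_. True) (real_top G) (real_top G) (g \<circ> F) id \<and>
           homotopic_with (\<lambda>_. True) (real_top H) (real_top H) (F \<circ> g) id))"

definition set_oinit :: "graph \<Rightarrow> oedge \<Rightarrow> nat \<Rightarrow> graph" where
  "set_oinit G x v = (if snd x then G\<lparr>src := (src G)(fst x := v)\<rparr>
                      else G\<lparr>tgt := (tgt G)(fst x := v)\<rparr>)"

definition fold_precond :: "graph \<Rightarrow> oedge \<Rightarrow> oedge \<Rightarrow> bool" where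
  "fold_precond G e0 e1 \<longleftrightarrow> e0 \<in> oedges G \<and> e1 \<in> oedges G \<and> e0 \<noteq> e1 \<and> e1 \<noteq> orev e0 \<and>
     oinit G e0 = oinit G e1"

text \<open>Proper full fold of e1 over e0: e1 = e1'' e1', e1'' identified with e0; the remaining
  piece e1' keeps the name of e1 and now starts at the terminal vertex of e0.\<close>
definition full_fold_graph :: "graph \<Rightarrow> oedge \<Rightarrow> oedge \<Rightarrow> graph" where
  "full_fold_graph G e0 e1 = set_oinit G e1 (oterm G e0)"

definition full_fold_map :: "oedge \<Rightarrow> oedge \<Rightarrow> gmap" where
  "full_fold_map e0 e1 = \<lparr>vmap = id, emap = (\<lambda>x. if x = e1 then [e0, e1]
      else if x = orev e1 then [orev e1, orev e0] else [x])\<rparr>"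

text \<open>Complete fold: e1 identified with e0 (so the terminal vertices get identified).\<close>
definition cf_quot :: "graph \<Rightarrow> oedge \<Rightarrow> oedge \<Rightarrow> nat \<Rightarrow> nat" where
  "cf_quot G e0 e1 u = (if u = oterm G e1 then oterm G e0 else u)"

definition complete_fold_graph :: "graph \<Rightarrow> oedge \<Rightarrow> oedge \<Rightarrow> graph" where
  "complete_fold_graph G e0 e1 = \<lparr>verts = cf_quot G e0 e1 ` verts G, edges = edges G - {fst e1},
      src = cf_quot G e0 e1 \<circ> src G, tgt = cf_quot G e0 e1 \<circ> tgt G\<rparr>"

definition complete_fold_map :: "graph \<Rightarrow> oedge \<Rightarrow> oedge \<Rightarrow> gmap" where
  "complete_fold_map G e0 e1 = \<lparr>vmap = cf_quot G e0 e1, emap = (\<lambda>x. if x = e1 then [e0]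
      else if x = orev e1 then [orev e0] else [x])\<rparr>"

text \<open>Partial fold: e0 = e0' e0'', e1 = e1'' e1', with e1'' identified with e0'. The new
  vertex is w, the common edge e0' = e1'' is the new edge (n, True); e0'' and e1' keep the
  names of e0 and e1.\<close>
definition partial_fold_graph :: "graph \<Rightarrow> oedge \<Rightarrow> oedge \<Rightarrow> nat \<Rightarrow> nat \<Rightarrow> graph" where
  "partial_fold_graph G e0 e1 w n =
     (let G' = set_oinit (set_oinit G e0 w) e1 w in
      G'\<lparr>verts := insert w (verts G), edges := insert n (edges G),
         src := (src G')(n := oinit G e0), tgt := (tgt G')(n := w)\<rparr>)"

definition partial_fold_map :: "oedge \<Rightarrow> oedge \<Rightarrow> nat \<Rightarrow> gmap" where
  "partial_fold_map e0 e1 n = \<lparr>vmap = id, emap = (\<lambda>x.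
      if x = e0 then [(n, True), e0] else if x = orev e0 then [orev e0, (n, False)]
      else if x = e1 then [(n, True), e1] else if x = orev e1 then [orev e1, (n, False)]
      else [x])\<rparr>"

definition is_fold :: "graph \<Rightarrow> graph \<Rightarrow> gmap \<Rightarrow> bool" where
  "is_fold G H \<phi> \<longleftrightarrow> (\<exists>e0 e1. fold_precond G e0 e1 \<and>
     ((H = full_fold_graph G e0 e1 \<and> \<phi> = full_fold_map e0 e1) \<or>
      (H = complete_fold_graph G e0 e1 \<and> \<phi> = complete_fold_map G e0 e1) \<or>
      (\<exists>w n. w \<notin> verts G \<and> n \<notin> edges G \<and>
          H = partial_fold_graph G e0 e1 w n \<and> \<phi> = partial_fold_map e0 e1 n)))"

definition single_fold_decomp :: "graph \<Rightarrow> gmap \<Rightarrow> bool" where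
  "single_fold_decomp G f \<longleftrightarrow>
     (\<exists>H \<phi> h. is_fold G H \<phi> \<and> graph_iso H G h \<and> map_eq G f (gcomp h \<phi>))"

text \<open>s-gonal graph of depth k: vertex i (i < s); edge e_i^j is encoded as i*k + (j-1),
  joining vertex i to vertex (i+1) mod s.\<close>
definition polygonal :: "nat \<Rightarrow> nat \<Rightarrow> graph" where
  "polygonal s k = \<lparr>verts = {0..<s}, edges = {0..<s * k},
      src = (\<lambda>e. e div k), tgt = (\<lambda>e. (e div k + 1) mod s)\<rparr>"

definition rose :: "nat \<Rightarrow> graph" where
  "rose r = polygonal 1 r"

text \<open>Delta_k^-: P_{3,k} minus the edge e_0^k.\<close>
definition delta_minus :: "nat \<Rightarrow> graph" where
  "delta_minus k = (polygonal 3 k)\<lparr>edges := edges (polygonal 3 k) - {k - 1}\<rparr>"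

text \<open>Delta_k^+: P_{3,k+1} minus e_0^{k+1} and e_1^{k+1} (from two distinct sides).\<close>
definition delta_plus :: "nat \<Rightarrow> graph" where
  "delta_plus k = (polygonal 3 (k + 1))\<lparr>edges := edges (polygonal 3 (k + 1)) - {k, 2 * k + 1}\<rparr>"

end

theory Submission imports Defs begin

lemma funpow_in: "f ` A \<subseteq> A \<Longrightarrow> x \<in> A \<Longrightarrow> (f^^k) x \<in> A"
  by (induction k) auto

lemma funpow_inj_on: "f ` A \<subseteq> A \<Longrightarrow> inj_on f A \<Longrightarrow> inj_on (f^^k) A"
proof (induction k)
  case 0 then show ?case by simp
next
  case (Suc k)
  have "inj_on (f^^k) A" using Suc.IH[OF Suc.prems] .
  then have "inj_on (f^^k) (f ` A)" by (rule inj_on_subset[OF _ Suc.prems(1)])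
  then have "inj_on ((f^^k) \<circ> f) A" by (rule comp_inj_on[OF Suc.prems(2)])
  then show ?case by (simp only: funpow_Suc_right)
qed

lemma funpow_periodic:
  assumes "finite A" "f ` A \<subseteq> A" "inj_on f A" "x \<in> A"
  shows "\<exists>n>0. (f^^n) x = x"
proof -
  let ?g = "\<lambda>k. (f^^k) x"
  have "\<not> inj_on ?g {..card A}"
  proof
    assume "inj_on ?g {..card A}"
    moreover have "?g ` {..card A} \<subseteq> A" using funpow_in[OF assms(2,4)] by auto
    ultimately have "card {..card A} \<le> card A" by (rule card_inj_on_le[OF _ _ assms(1)])
    then show False by simp
  qed
  then obtain i j where ij: "i \<noteq> j" "?g i = ?g j" unfolding inj_on_def by auto
  have key: "\<And>i j. i < j \<Longrightarrow> ?g i = ?g j \<Longrightarrow> \<exists>n>0. (f^^n) x = x"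
  proof -
    fix i j :: nat assume "i < j" "?g i = ?g j"
    have "(f^^i) ((f^^(j-i)) x) = (f^^(i + (j-i))) x" by (simp only: funpow_add o_apply)
    also have "\<dots> = (f^^j) x" using \<open>i < j\<close> by simp
    also have "\<dots> = (f^^i) x" using \<open>?g i = ?g j\<close> by simp
    finally have c: "(f^^i) ((f^^(j-i)) x) = (f^^i) x" .
    have m: "(f^^(j-i)) x \<in> A" using funpow_in[OF assms(2,4)] by blast
    have "(f^^(j-i)) x = x" using inj_onD[OF funpow_inj_on[OF assms(2,3), of i] c m assms(4)] .
    then show "\<exists>n>0. (f^^n) x = x" using \<open>i < j\<close> by (intro exI[of _ "j-i"]) auto
  qed
  show ?thesis
  proof (cases "i < j")
    case True then show ?thesis using key[of i j] ij(2) by simp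
  next
    case False then have "j < i" using ij by simp
    then show ?thesis using key[of j i] ij(2) by simp
  qed
qed

lemma funpow_mult_period: "(f^^p) x = x \<Longrightarrow> (f^^(p*q)) x = x"
  by (induction q) (auto simp: funpow_add)

lemma funpow_mod_period: "(f^^p) x = x \<Longrightarrow> (f^^k) x = (f^^(k mod p)) x"
proof -
  assume h: "(f^^p) x = x"
  have "(f^^k) x = (f^^(k mod p + p * (k div p))) x" by simp
  also have "\<dots> = (f^^(k mod p)) ((f^^(p * (k div p))) x)" by (simp only: funpow_add o_apply)
  also have "\<dots> = (f^^(k mod p)) x" using funpow_mult_period[OF h] by simp
  finally show ?thesis .
qed

lemma funpow_period_eq:
  assumes "f ` A \<subseteq> A" "inj_on f A" "x \<in> A" "0 < p" "(f^^p) x = x"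
    and least: "\<And>k. 0 < k \<Longrightarrow> k < p \<Longrightarrow> (f^^k) x \<noteq> x"
  shows "(f^^i) x = (f^^j) x \<longleftrightarrow> i mod p = j mod p"
proof
  assume h: "i mod p = j mod p"
  have "(f^^i) x = (f^^(i mod p)) x" by (rule funpow_mod_period[OF assms(5)])
  also have "\<dots> = (f^^(j mod p)) x" using h by simp
  also have "\<dots> = (f^^j) x" by (rule funpow_mod_period[OF assms(5), symmetric])
  finally show "(f^^i) x = (f^^j) x" .
next
  assume eq: "(f^^i) x = (f^^j) x"
  have key: "\<And>a b. a < b \<Longrightarrow> b < p \<Longrightarrow> (f^^a) x = (f^^b) x \<Longrightarrow> False"
  proof -
    fix a b :: nat assume ab: "a < b" "b < p" "(f^^a) x = (f^^b) x"
    have "(f^^a) ((f^^(b-a)) x) = (f^^(a + (b-a))) x" by (simp only: funpow_add o_apply)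
    also have "\<dots> = (f^^b) x" using ab(1) by simp
    also have "\<dots> = (f^^a) x" using ab(3) by simp
    finally have c: "(f^^a) ((f^^(b-a)) x) = (f^^a) x" .
    have m: "(f^^(b-a)) x \<in> A" using funpow_in[OF assms(1,3)] by blast
    have "(f^^(b-a)) x = x" using inj_onD[OF funpow_inj_on[OF assms(1,2), of a] c m assms(3)] .
    then show False using least[of "b-a"] ab by simp
  qed
  have e2: "(f^^(i mod p)) x = (f^^(j mod p)) x"
    using eq funpow_mod_period[OF assms(5), of i] funpow_mod_period[OF assms(5), of j] by simp
  have "i mod p < p" "j mod p < p" using assms(4) by auto
  then show "i mod p = j mod p"
  proof -
    { assume "i mod p < j mod p" then have False using key[of "i mod p" "j mod p"] e2 \<open>j mod p < p\<close> by blast }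
    moreover
    { assume "j mod p < i mod p" then have False using key[of "j mod p" "i mod p"] e2 \<open>i mod p < p\<close> by simp }
    ultimately show ?thesis by (cases "i mod p < j mod p"; cases "j mod p < i mod p") auto
  qed
qed


lemma orev_orev[simp]: "orev (orev x) = x" by (simp add: orev_def)
lemma orev_neq[simp]: "orev x \<noteq> x" "x \<noteq> orev x" by (auto simp: orev_def prod_eq_iff)
lemma fst_orev[simp]: "fst (orev x) = fst x" by (simp add: orev_def)
lemma orev_eq_iff[simp]: "orev x = orev y \<longleftrightarrow> x = y" by (metis orev_orev)
lemma oedges_iff: "x \<in> oedges G \<longleftrightarrow> fst x \<in> edges G" by (cases x) (simp add: oedges_def)
lemma orev_in[simp]: "orev x \<in> oedges G \<longleftrightarrow> x \<in> oedges G" by (simp add: oedges_iff)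
lemma oinit_orev: "oinit G (orev x) = oterm G x" by (simp add: oterm_def)
lemma oterm_orev: "oterm G (orev x) = oinit G x" by (simp add: oterm_def)
lemma same_fst: "fst x = fst y \<Longrightarrow> y = x \<or> y = orev x"
  by (cases x; cases y) (auto simp: orev_def)

lemma path_inv:
  assumes "is_path G ps" "\<forall>y\<in>set ps. P (oinit G y) = P (oterm G y)"
  shows "P (oinit G (hd ps)) = P (oterm G (last ps))"
  using assms
proof (induction ps)
  case Nil then show ?case by (simp add: is_path_def)
next
  case (Cons y ys)
  show ?case
  proof (cases "ys = []")
    case True then show ?thesis using Cons.prems(2) by simp
  next
    case False
    have h: "\<forall>i. Suc i < length (y#ys) \<longrightarrow> oterm G ((y#ys)!i) = oinit G ((y#ys)! Suc i)"
      using Cons.prems(1) unfolding is_path_def by blast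
    have adj: "oterm G y = oinit G (hd ys)"
      using h[rule_format, of 0] False by (cases ys) auto
    have "is_path G ys" unfolding is_path_def
    proof (intro conjI allI impI)
      show "ys \<noteq> []" by fact
      show "set ys \<subseteq> oedges G" using Cons.prems(1) unfolding is_path_def by auto
      fix i assume "Suc i < length ys"
      then show "oterm G (ys ! i) = oinit G (ys ! Suc i)" using h[rule_format, of "Suc i"] by simp
    qed
    then have "P (oinit G (hd ys)) = P (oterm G (last ys))" using Cons.IH Cons.prems(2) by simp
    then show ?thesis using adj Cons.prems(2) False by simp
  qed
qed

lemma card_oedges: "finite (edges G) \<Longrightarrow> card (oedges G) = 2 * card (edges G)"
  by (simp add: oedges_def card_cartesian_product)

lemma iso_build:
  fixes G X :: graph and \<psi> :: "nat \<Rightarrow> nat" and Xe Ye :: "nat \<Rightarrow> oedge" and N :: nat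
  assumes finEX: "finite (edges X)"
  and psi: "bij_betw \<psi> (verts G) (verts X)"
  and Xin: "\<And>m. m \<in> {1..N} \<Longrightarrow> Xe m \<in> oedges G"
  and Xinj: "\<And>i j. i \<in> {1..N} \<Longrightarrow> j \<in> {1..N} \<Longrightarrow> fst (Xe i) = fst (Xe j) \<Longrightarrow> i = j"
  and Xcov: "\<And>y. y \<in> oedges G \<Longrightarrow> \<exists>m\<in>{1..N}. y = Xe m \<or> y = orev (Xe m)"
  and Yin: "\<And>m. m \<in> {1..N} \<Longrightarrow> Ye m \<in> oedges X"
  and Yinj: "\<And>i j. i \<in> {1..N} \<Longrightarrow> j \<in> {1..N} \<Longrightarrow> fst (Ye i) = fst (Ye j) \<Longrightarrow> i = j"
  and cardX: "card (edges X) = N"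
  and ends: "\<And>m. m \<in> {1..N} \<Longrightarrow> oinit X (Ye m) = \<psi> (oinit G (Xe m)) \<and> oterm X (Ye m) = \<psi> (oterm G (Xe m))"
  shows "isomorphic G X"
proof -
  define idx :: "oedge \<Rightarrow> nat" where "idx y = (THE m. m \<in> {1..N} \<and> fst (Xe m) = fst y)" for y
  have idx: "idx y \<in> {1..N} \<and> (y = Xe (idx y) \<or> y = orev (Xe (idx y)))" if yin: "y \<in> oedges G" for y
  proof -
    obtain m where m: "m \<in> {1..N}" "y = Xe m \<or> y = orev (Xe m)" using Xcov[OF yin] by blast
    have fm: "fst (Xe m) = fst y" using m(2) by auto
    have "idx y = m" unfolding idx_def
    proof (rule the_equality)
      show "m \<in> {1..N} \<and> fst (Xe m) = fst y" using m fm by simp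
      fix k assume "k \<in> {1..N} \<and> fst (Xe k) = fst y"
      then show "k = m" using Xinj[of k m] m(1) fm by simp
    qed
    then show ?thesis using m by simp
  qed
  define em :: "oedge \<Rightarrow> oedge" where "em y = (if y = Xe (idx y) then Ye (idx y) else orev (Ye (idx y)))" for y
  have em_cases: "\<exists>m\<in>{1..N}. (y = Xe m \<and> em y = Ye m) \<or> (y = orev (Xe m) \<and> em y = orev (Ye m))"
    if yin: "y \<in> oedges G" for y
  proof -
    obtain m where m: "m = idx y" by blast
    have mm: "m \<in> {1..N}" "y = Xe m \<or> y = orev (Xe m)" using idx[OF yin] m by auto
    show ?thesis
    proof (cases "y = Xe m")
      case True
      have "em y = Ye m" unfolding em_def m[symmetric] using True by (rule if_P)
      then show ?thesis using mm True by blast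
    next
      case False
      have "em y = orev (Ye m)" unfolding em_def m[symmetric] using False by (rule if_not_P)
      then show ?thesis using mm False by blast
    qed
  qed
  have em_in: "em y \<in> oedges X" if yin: "y \<in> oedges G" for y
    using em_cases[OF yin] Yin by auto
  have em_init: "oinit X (em y) = \<psi> (oinit G y)" if yin: "y \<in> oedges G" for y
    using em_cases[OF yin] ends by (auto simp: oinit_orev oterm_orev)
  have em_rev: "em (orev y) = orev (em y)" if yin: "y \<in> oedges G" for y
  proof -
    obtain m where m: "m \<in> {1..N}" "(y = Xe m \<and> em y = Ye m) \<or> (y = orev (Xe m) \<and> em y = orev (Ye m))"
      using em_cases[OF yin] by blast
    have oy: "orev y \<in> oedges G" using yin by simp
    obtain k where k: "k \<in> {1..N}" "(orev y = Xe k \<and> em (orev y) = Ye k) \<or> (orev y = orev (Xe k) \<and> em (orev y) = orev (Ye k))"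
      using em_cases[OF oy] by blast
    have f1: "fst y = fst (Xe m)" using m(2) by (elim disjE conjE) simp_all
    have f2: "fst (orev y) = fst (Xe k)" using k(2) by (elim disjE conjE) simp_all
    have "fst (Xe k) = fst (Xe m)" using f1 f2 by simp
    then have "k = m" using Xinj k(1) m(1) by blast
    then show ?thesis using m(2) k(2) by auto
  qed
  have em_inj: "inj_on em (oedges G)"
  proof (rule inj_onI)
    fix y z assume yz: "y \<in> oedges G" "z \<in> oedges G" "em y = em z"
    obtain m where m: "m \<in> {1..N}" "(y = Xe m \<and> em y = Ye m) \<or> (y = orev (Xe m) \<and> em y = orev (Ye m))"
      using em_cases[OF yz(1)] by blast
    obtain k where k: "k \<in> {1..N}" "(z = Xe k \<and> em z = Ye k) \<or> (z = orev (Xe k) \<and> em z = orev (Ye k))"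
      using em_cases[OF yz(2)] by blast
    have f1: "fst (em y) = fst (Ye m)" using m(2) by (elim disjE conjE) simp_all
    have f2: "fst (em z) = fst (Ye k)" using k(2) by (elim disjE conjE) simp_all
    have "fst (Ye k) = fst (Ye m)" using f1 f2 yz(3) by simp
    then have "k = m" using Yinj k(1) m(1) by blast
    then show "y = z" using m(2) k(2) yz(3) by auto
  qed
  have EG: "edges G = (\<lambda>m. fst (Xe m)) ` {1..N}"
  proof
    show "edges G \<subseteq> (\<lambda>m. fst (Xe m)) ` {1..N}"
    proof
      fix e assume "e \<in> edges G"
      then have "(e, True) \<in> oedges G" by (simp add: oedges_iff)
      then obtain m where m: "m \<in> {1..N}" "(e,True) = Xe m \<or> (e,True) = orev (Xe m)" using Xcov by blast
      have "fst (e, True) = fst (Xe m)" using m(2) by (elim disjE) (simp only:, simp only: fst_orev)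
      then have "e = fst (Xe m)" by simp
      then show "e \<in> (\<lambda>m. fst (Xe m)) ` {1..N}" using m(1) by blast
    qed
    show "(\<lambda>m. fst (Xe m)) ` {1..N} \<subseteq> edges G" using Xin by (auto simp: oedges_iff)
  qed
  have "inj_on (\<lambda>m. fst (Xe m)) {1..N}" using Xinj by (auto intro: inj_onI)
  then have cG: "card (edges G) = N" unfolding EG by (simp add: card_image)
  have finG: "finite (edges G)" unfolding EG by simp
  have cO: "card (oedges G) = card (oedges X)" using card_oedges[OF finG] card_oedges[OF finEX] cG cardX by simp
  have finOX: "finite (oedges X)" using finEX by (simp add: oedges_def)
  have img: "em ` oedges G = oedges X"
  proof (rule card_subset_eq[OF finOX])
    show "em ` oedges G \<subseteq> oedges X" using em_in by auto
    show "card (em ` oedges G) = card (oedges X)" using card_image[OF em_inj] cO by simp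
  qed
  define h where "h = \<lparr>vmap = \<psi>, emap = (\<lambda>y. [em y])\<rparr>"
  have "graph_iso G X h"
    unfolding graph_iso_def graph_map_def
  proof (intro conjI ballI)
    show "\<And>v. v \<in> verts G \<Longrightarrow> vmap h v \<in> verts X" using psi by (simp add: h_def bij_betw_apply)
    fix x assume x: "x \<in> oedges G"
    show "is_path X (emap h x)" using em_in[OF x] by (simp add: h_def is_path_def)
    show "oinit X (hd (emap h x)) = vmap h (oinit G x)" using em_init[OF x] by (simp add: h_def)
    show "emap h (orev x) = rev_path (emap h x)" using em_rev[OF x] by (simp add: h_def rev_path_def)
    show "length (emap h x) = 1" by (simp add: h_def)
  next
    show "bij_betw (vmap h) (verts G) (verts X)" using psi by (simp add: h_def)
    show "bij_betw (\<lambda>x. hd (emap h x)) (oedges G) (oedges X)"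
      using em_inj img by (simp add: h_def bij_betw_def)
  qed
  then show ?thesis unfolding isomorphic_def by blast
qed

lemma mod3_plus: assumes "2 \<le> (q::nat)" shows "(3 * q - 1) mod 3 = 2"
proof -
  obtain t where t: "q = Suc t" using assms by (cases q) auto
  then have "3 * q - 1 = 2 + 3 * t" by simp
  moreover have "(2 + 3 * t) mod 3 = 2 mod (3::nat)" by (rule mod_mult_self2)
  ultimately show ?thesis by simp
qed
lemma mod3_minus: assumes "2 \<le> (q::nat)" shows "(3 * q - 3) mod 3 = 0"
proof -
  obtain t where t: "q = Suc t" using assms by (cases q) auto
  then have "3 * q - 3 = 3 * t" by simp
  then show ?thesis by simp
qed
lemma lt3: "(s::nat) < 3 \<Longrightarrow> s = 0 \<or> s = 1 \<or> s = 2" by auto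
lemma mod3_3: "(x::nat) mod 3 = 0 \<or> x mod 3 = 1 \<or> x mod 3 = 2" using lt3[of "x mod 3"] by simp
lemma mod3_cases: "(x::nat) mod 3 \<noteq> 0 \<Longrightarrow> x mod 3 = 1 \<or> x mod 3 = 2" using mod3_3[of x] by auto
lemma mod3_ex1: "(x::nat) mod 3 = 1 \<Longrightarrow> \<exists>q. x = 3 * q + 1"
proof -
  assume h: "x mod 3 = 1"
  have "x = 3 * (x div 3) + x mod 3" by simp
  then show ?thesis using h by auto
qed
lemma mod3_ex2: "(x::nat) mod 3 = 2 \<Longrightarrow> \<exists>q. x = 3 * q + 2"
proof -
  assume h: "x mod 3 = 2"
  have "x = 3 * (x div 3) + x mod 3" by simp
  then show ?thesis using h by auto
qed

lemma dec3:
  fixes m :: nat assumes "1 \<le> m"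
  shows "\<exists>t s. m = 3 * t + s + 1 \<and> s < 3 \<and> (m - 1) div 3 = t \<and> (m + 1) mod 3 = (s + 2) mod 3 \<and> m mod 3 = (s + 1) mod 3"
proof -
  define t where "t = (m - 1) div 3"
  define s where "s = (m - 1) mod 3"
  have e: "m - 1 = 3 * t + s" unfolding t_def s_def by simp
  have m: "m = 3 * t + s + 1" using e assms by simp
  have "(m + 1) mod 3 = ((m - 1) + 2) mod 3" using assms by (simp add: add.commute)
  also have "\<dots> = ((m - 1) mod 3 + 2) mod 3" by (rule mod_add_left_eq[symmetric])
  finally have p1: "(m + 1) mod 3 = (s + 2) mod 3" unfolding s_def .
  have "m mod 3 = ((m - 1) + 1) mod 3" using assms by simp
  also have "\<dots> = ((m - 1) mod 3 + 1) mod 3" by (rule mod_add_left_eq[symmetric])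
  finally have p2: "m mod 3 = (s + 1) mod 3" unfolding s_def .
  have s3: "s < 3" unfolding s_def by simp
  have tt: "(m - 1) div 3 = t" by (simp add: t_def)
  show ?thesis by (rule exI[of _ t], rule exI[of _ s]) (intro conjI m s3 tt p1 p2)
qed

lemma small_a: "(N::nat) \<le> 4 \<Longrightarrow> {m\<in>{1..N}. m mod 3 = 0} \<subseteq> {3}"
proof
  fix m assume "N \<le> 4" "m \<in> {m\<in>{1..N}. m mod 3 = 0}"
  then have "1 \<le> m" "m \<le> 4" "m mod 3 = 0" by auto
  then have "m = 1 \<or> m = 2 \<or> m = 3 \<or> m = 4" by linarith
  then show "m \<in> {3}" using \<open>m mod 3 = 0\<close> by (elim disjE) simp_all
qed
lemma small_b: "(N::nat) \<le> 4 \<Longrightarrow> {m\<in>{1..N}. (m + 1) mod 3 = 0} \<subseteq> {2}"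
proof
  fix m assume "N \<le> 4" "m \<in> {m\<in>{1..N}. (m + 1) mod 3 = 0}"
  then have "1 \<le> m" "m \<le> 4" "(m + 1) mod 3 = 0" by auto
  then have "m = 1 \<or> m = 2 \<or> m = 3 \<or> m = 4" by linarith
  then show "m \<in> {2}" using \<open>(m + 1) mod 3 = 0\<close> by (elim disjE) simp_all
qed
lemma small_c: "(N::nat) \<le> 2 \<Longrightarrow> {m\<in>{1..N}. m mod 3 = 0} = {}"
proof -
  assume N: "N \<le> 2"
  { fix m assume "m \<in> {m\<in>{1..N}. m mod 3 = 0}"
    then have "1 \<le> m" "m \<le> 2" "m mod 3 = 0" using N by auto
    then have "m = 1 \<or> m = 2" by linarith
    then have False using \<open>m mod 3 = 0\<close> by (elim disjE) simp_all }
  then show ?thesis by (rule equals0I)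
qed
lemma small_d: "(N::nat) \<le> 2 \<Longrightarrow> {m\<in>{1..N}. (m + 2) mod 3 = 0} \<subseteq> {1}"
proof
  fix m assume "N \<le> 2" "m \<in> {m\<in>{1..N}. (m + 2) mod 3 = 0}"
  then have "1 \<le> m" "m \<le> 2" "(m + 2) mod 3 = 0" by auto
  then have "m = 1 \<or> m = 2" by linarith
  then show "m \<in> {1}" using \<open>(m + 2) mod 3 = 0\<close> by (elim disjE) simp_all
qed

lemma divK: "i < (K::nat) \<Longrightarrow> (s*K + i) div K = s" by simp
lemma modK: "i < (K::nat) \<Longrightarrow> (s*K + i) mod K = i" by simp

lemma dp_arith:
  fixes m q :: nat
  assumes m1: "1 \<le> m" and mq: "m \<le> 3*q+1"
  shows "(m-1) div 3 < q+1" "(m+1) mod 3 * (q+1) + (m-1) div 3 < 3*(q+1)"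
        "(m+1) mod 3 * (q+1) + (m-1) div 3 \<noteq> q" "(m+1) mod 3 * (q+1) + (m-1) div 3 \<noteq> 2*q+1"
proof -
  obtain t s where ts: "m = 3 * t + s + 1" "s < 3" "(m - 1) div 3 = t" "(m + 1) mod 3 = (s + 2) mod 3"
    using dec3[OF m1] by blast
  have tq: "3 * t + s \<le> 3 * q" using ts(1) mq by simp
  show "(m-1) div 3 < q+1" using ts(3) tq by simp
  have "s = 0 \<or> s = 1 \<or> s = 2" using lt3[OF ts(2)] .
  then have "((m+1) mod 3 = 2 \<and> s = 0) \<or> ((m+1) mod 3 = 0 \<and> s = 1) \<or> ((m+1) mod 3 = 1 \<and> s = 2)"
    using ts(4) by auto
  then have "(m+1) mod 3 * (q+1) + (m-1) div 3 < 3*(q+1) \<and> (m+1) mod 3 * (q+1) + (m-1) div 3 \<noteq> q \<and>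
             (m+1) mod 3 * (q+1) + (m-1) div 3 \<noteq> 2*q+1"
    using tq ts(3) by (elim disjE conjE) simp_all
  then show "(m+1) mod 3 * (q+1) + (m-1) div 3 < 3*(q+1)" "(m+1) mod 3 * (q+1) + (m-1) div 3 \<noteq> q"
    "(m+1) mod 3 * (q+1) + (m-1) div 3 \<noteq> 2*q+1" by simp_all
qed

lemma mod_lt3_eq: "(s::nat) < 3 \<Longrightarrow> s' < 3 \<Longrightarrow> (s + k) mod 3 = (s' + k) mod 3 \<Longrightarrow> s = s'"
proof -
  assume a: "s < 3" "s' < 3" "(s + k) mod 3 = (s' + k) mod 3"
  have "(s + k) mod 3 = (s + k mod 3) mod 3" "(s' + k) mod 3 = (s' + k mod 3) mod 3"
    by (simp_all add: mod_add_right_eq)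
  then have "(s + k mod 3) mod 3 = (s' + k mod 3) mod 3" using a(3) by simp
  moreover have "k mod 3 = 0 \<or> k mod 3 = 1 \<or> k mod 3 = 2" by (rule mod3_3)
  ultimately show "s = s'" using lt3[OF a(1)] lt3[OF a(2)] by (elim disjE) simp_all
qed

lemma dp_inj:
  fixes m m' q :: nat
  assumes "1 \<le> m" "m \<le> 3*q+1" "1 \<le> m'" "m' \<le> 3*q+1"
    and "(m+1) mod 3 * (q+1) + (m-1) div 3 = (m'+1) mod 3 * (q+1) + (m'-1) div 3"
  shows "m = m'"
proof -
  have i: "(m-1) div 3 < q+1" "(m'-1) div 3 < q+1" using dp_arith assms by auto
  have e1: "(m+1) mod 3 = (m'+1) mod 3" using divK[OF i(1), of "(m+1) mod 3"] divK[OF i(2), of "(m'+1) mod 3"] assms(5) by simp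
  have e2: "(m-1) div 3 = (m'-1) div 3" using modK[OF i(1), of "(m+1) mod 3"] modK[OF i(2), of "(m'+1) mod 3"] assms(5) by simp
  obtain t s where ts: "m = 3 * t + s + 1" "s < 3" "(m - 1) div 3 = t" "(m + 1) mod 3 = (s + 2) mod 3"
    using dec3[OF assms(1)] by blast
  obtain t' s' where ts': "m' = 3 * t' + s' + 1" "s' < 3" "(m' - 1) div 3 = t'" "(m' + 1) mod 3 = (s' + 2) mod 3"
    using dec3[OF assms(3)] by blast
  have "(s + 2) mod 3 = (s' + 2) mod 3" by (simp only: ts(4)[symmetric] ts'(4)[symmetric] e1)
  then have "s = s'" by (rule mod_lt3_eq[OF ts(2) ts'(2)])
  moreover have "t = t'" using e2 ts(3) ts'(3) by simp
  ultimately show ?thesis using ts(1) ts'(1) by simp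
qed

lemma dm_arith:
  fixes m q :: nat
  assumes m1: "1 \<le> m" and mq: "m \<le> 3*q+2"
  shows "(m-1) div 3 < q+1" "m mod 3 * (q+1) + (m-1) div 3 < 3*(q+1)"
        "m mod 3 * (q+1) + (m-1) div 3 \<noteq> q"
proof -
  obtain t s where ts: "m = 3 * t + s + 1" "s < 3" "(m - 1) div 3 = t" "m mod 3 = (s + 1) mod 3"
    using dec3[OF m1] by blast
  have tq: "3 * t + s \<le> 3 * q + 1" using ts(1) mq by simp
  show "(m-1) div 3 < q+1" using ts(3) tq by simp
  have "s = 0 \<or> s = 1 \<or> s = 2" using lt3[OF ts(2)] .
  then have "(m mod 3 = 1 \<and> s = 0) \<or> (m mod 3 = 2 \<and> s = 1) \<or> (m mod 3 = 0 \<and> s = 2)"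
    using ts(4) by auto
  then have "m mod 3 * (q+1) + (m-1) div 3 < 3*(q+1) \<and> m mod 3 * (q+1) + (m-1) div 3 \<noteq> q"
    using tq ts(3) by (elim disjE conjE) simp_all
  then show "m mod 3 * (q+1) + (m-1) div 3 < 3*(q+1)" "m mod 3 * (q+1) + (m-1) div 3 \<noteq> q" by simp_all
qed

lemma dm_inj:
  fixes m m' q :: nat
  assumes "1 \<le> m" "m \<le> 3*q+2" "1 \<le> m'" "m' \<le> 3*q+2"
    and "m mod 3 * (q+1) + (m-1) div 3 = m' mod 3 * (q+1) + (m'-1) div 3"
  shows "m = m'"
proof -
  have i: "(m-1) div 3 < q+1" "(m'-1) div 3 < q+1" using dm_arith assms by auto
  have e1: "m mod 3 = m' mod 3" using divK[OF i(1), of "m mod 3"] divK[OF i(2), of "m' mod 3"] assms(5) by simp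
  have e2: "(m-1) div 3 = (m'-1) div 3" using modK[OF i(1), of "m mod 3"] modK[OF i(2), of "m' mod 3"] assms(5) by simp
  obtain t s where ts: "m = 3 * t + s + 1" "s < 3" "(m - 1) div 3 = t" "m mod 3 = (s + 1) mod 3"
    using dec3[OF assms(1)] by blast
  obtain t' s' where ts': "m' = 3 * t' + s' + 1" "s' < 3" "(m' - 1) div 3 = t'" "m' mod 3 = (s' + 1) mod 3"
    using dec3[OF assms(3)] by blast
  have "(s + 1) mod 3 = (s' + 1) mod 3" by (simp only: ts(4)[symmetric] ts'(4)[symmetric] e1)
  then have "s = s'" by (rule mod_lt3_eq[OF ts(2) ts'(2)])
  moreover have "t = t'" using e2 ts(3) ts'(3) by simp
  ultimately show ?thesis using ts(1) ts'(1) by simp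
qed

definition sig :: "(oedge \<Rightarrow> oedge) \<Rightarrow> nat \<Rightarrow> nat" where "sig \<tau> i = fst (\<tau> (i, True))"

locale fsetup =
  fixes G :: graph and \<tau> :: "oedge \<Rightarrow> oedge" and \<beta> :: "nat \<Rightarrow> nat" and e0 e1 :: oedge
  assumes wf: "wf_graph G"
    and conn: "connected_graph G"
    and val3: "\<forall>v\<in>verts G. 3 \<le> valence G v"
    and pre: "fold_precond G e0 e1"
    and tau_in: "\<forall>x\<in>oedges G. \<tau> x \<in> oedges G"
    and tau_inj: "inj_on \<tau> (oedges G)"
    and tau_rev: "\<forall>x\<in>oedges G. \<tau> (orev x) = orev (\<tau> x)"
    and beta_in: "\<forall>v\<in>verts G. \<beta> v \<in> verts G"
    and beta_inj: "inj_on \<beta> (verts G)"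
    and init_step: "\<forall>x\<in>oedges G. oinit G (\<tau> x) = \<beta> (if x = e1 then oterm G e0 else oinit G x)"
    and reach: "\<forall>k\<in>edges G. \<exists>l. (sig \<tau> ^^ l) k = fst e1"
begin

abbreviation "\<sigma> \<equiv> sig \<tau>"
abbreviation "a \<equiv> fst e1"
abbreviation "u \<equiv> oterm G e0"
abbreviation "v \<equiv> oinit G e0"
abbreviation "w \<equiv> oterm G e1"
definition xs :: "nat \<Rightarrow> oedge" where "xs m = (\<tau>^^m) e1"
definition n :: nat where "n = (LEAST m. 0 < m \<and> fst (xs m) = a)"

lemma finE: "finite (edges G)" using wf by (simp add: wf_graph_def)
lemma finV: "finite (verts G)" using wf by (simp add: wf_graph_def)
lemma finO: "finite (oedges G)" using finE by (simp add: oedges_def)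
lemma e0_in: "e0 \<in> oedges G" and e1_in: "e1 \<in> oedges G" and e01: "e0 \<noteq> e1" "e1 \<noteq> orev e0"
  and v_eq: "oinit G e1 = v"
  using pre by (auto simp: fold_precond_def)
lemma oinit_in: "x \<in> oedges G \<Longrightarrow> oinit G x \<in> verts G"
  using wf by (cases x) (auto simp: wf_graph_def oinit_def oedges_def)
lemma oterm_in: "x \<in> oedges G \<Longrightarrow> oterm G x \<in> verts G"
  using oinit_in[of "orev x"] by (simp add: oterm_def)

lemma term_step: assumes "x \<in> oedges G"
  shows "oterm G (\<tau> x) = \<beta> (if x = orev e1 then u else oterm G x)"
proof -
  have "oterm G (\<tau> x) = oinit G (\<tau> (orev x))" using tau_rev assms by (simp add: oterm_def)
  also have "\<dots> = \<beta> (if orev x = e1 then u else oinit G (orev x))" using init_step assms by simp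
  also have "\<dots> = \<beta> (if x = orev e1 then u else oterm G x)"
  proof -
    have "orev x = e1 \<longleftrightarrow> x = orev e1" by auto
    then show ?thesis by (simp add: oinit_orev)
  qed
  finally show ?thesis .
qed

lemma fst_tau: assumes "x \<in> oedges G" shows "fst (\<tau> x) = \<sigma> (fst x)"
proof (cases x)
  case (Pair i b)
  show ?thesis
  proof (cases b)
    case True then show ?thesis using Pair by (simp add: sig_def)
  next
    case False
    then have "x = orev (i, True)" using Pair by (simp add: orev_def)
    moreover have "(i,True) \<in> oedges G" using assms Pair by (simp add: oedges_iff)
    ultimately have "\<tau> x = orev (\<tau> (i,True))" using tau_rev by simp
    then show ?thesis using Pair by (simp add: sig_def)
  qed
qed

lemma sig_in: "i \<in> edges G \<Longrightarrow> \<sigma> i \<in> edges G"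
  using tau_in by (auto simp: sig_def oedges_iff)

lemma sig_inj: "inj_on \<sigma> (edges G)"
proof (rule inj_onI)
  fix i j assume ij: "i \<in> edges G" "j \<in> edges G" "\<sigma> i = \<sigma> j"
  have ii: "(i,True) \<in> oedges G" "(j,True) \<in> oedges G" "(j,False) \<in> oedges G"
    using ij by (auto simp: oedges_iff)
  have "\<tau> (i,True) = \<tau> (j,True) \<or> \<tau> (i,True) = orev (\<tau> (j,True))"
  proof -
    have "fst (\<tau> (j,True)) = fst (\<tau> (i,True))" using ij(3) unfolding sig_def by (rule sym)
    then show ?thesis by (rule same_fst)
  qed
  moreover have "orev (\<tau> (j,True)) = \<tau> (j, False)"
  proof -
    have "(j,False) = orev (j,True)" by (simp add: orev_def)
    then show ?thesis using tau_rev ii(2) by simp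
  qed
  ultimately have "\<tau> (i,True) = \<tau> (j,True) \<or> \<tau> (i,True) = \<tau> (j,False)" by simp
  then have "(i,True) = (j,True) \<or> (i,True) = (j,False)"
    using inj_onD[OF tau_inj _ ii(1) ii(2)] inj_onD[OF tau_inj _ ii(1) ii(3)] by blast
  then show "i = j" by simp
qed

lemma xs_in: "xs m \<in> oedges G"
  unfolding xs_def using funpow_in[of \<tau> "oedges G" e1 m] tau_in e1_in by auto

lemma xs_Suc: "xs (Suc m) = \<tau> (xs m)" by (simp add: xs_def)

lemma fst_xs: "fst (xs m) = (\<sigma>^^m) a"
proof (induction m)
  case 0 then show ?case by (simp add: xs_def)
next
  case (Suc m) then show ?case using fst_tau[OF xs_in[of m]] by (simp add: xs_Suc)
qed

lemma n_ex: "\<exists>m. 0 < m \<and> fst (xs m) = a"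
proof -
  have "\<tau> ` oedges G \<subseteq> oedges G" using tau_in by auto
  from funpow_periodic[OF finO this tau_inj e1_in] obtain m where "0 < m" "(\<tau>^^m) e1 = e1" by blast
  then show ?thesis by (auto simp: xs_def)
qed

lemma n_pos: "0 < n" and fst_xs_n: "fst (xs n) = a"
  using LeastI_ex[OF n_ex] by (auto simp: n_def)

lemma n_least: "0 < m \<Longrightarrow> m < n \<Longrightarrow> fst (xs m) \<noteq> a"
  using not_less_Least[of m "\<lambda>m. 0 < m \<and> fst (xs m) = a"] by (auto simp: n_def)

lemma xs_n: "xs n = e1 \<or> xs n = orev e1"
  using same_fst[OF fst_xs_n[symmetric]] .

lemma xs_ne: "0 < m \<Longrightarrow> m < n \<Longrightarrow> xs m \<noteq> e1 \<and> xs m \<noteq> orev e1"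
  using n_least[of m] by auto

lemma a_in: "a \<in> edges G" using e1_in by (simp add: oedges_iff)

lemma sig_img: "\<sigma> ` edges G \<subseteq> edges G" using sig_in by auto

lemma sig_eq: "(\<sigma>^^i) a = (\<sigma>^^j) a \<longleftrightarrow> i mod n = j mod n"
  by (rule funpow_period_eq[OF sig_img sig_inj a_in n_pos])
     (use fst_xs_n n_least fst_xs in auto)

lemma xs_inj: "i \<in> {1..n} \<Longrightarrow> j \<in> {1..n} \<Longrightarrow> fst (xs i) = fst (xs j) \<Longrightarrow> i = j"
proof -
  assume ij: "i \<in> {1..n}" "j \<in> {1..n}" "fst (xs i) = fst (xs j)"
  then have "i mod n = j mod n" using sig_eq fst_xs by simp
  moreover have "i mod n = (if i = n then 0 else i)" using ij(1) by auto
  moreover have "j mod n = (if j = n then 0 else j)" using ij(2) by auto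
  ultimately show "i = j" using ij(1,2) by (auto split: if_splits)
qed

lemma cover_edge: assumes "k \<in> edges G" shows "\<exists>m\<in>{1..n}. fst (xs m) = k"
proof -
  obtain l where l: "(\<sigma>^^l) k = a" using reach assms by blast
  have n1: "n \<in> {1..n}" "(\<sigma>^^n) a = a" using fst_xs_n fst_xs[of n] n_pos by auto
  have main: "\<And>k. k \<in> edges G \<Longrightarrow> (\<sigma>^^l) k = a \<Longrightarrow> \<exists>m\<in>{1..n}. (\<sigma>^^m) a = k"
  proof (induction l)
    case 0
    then have ka: "k = a" by (simp only: funpow_0)
    show ?case using n1 ka by blast
  next
    case (Suc l)
    have "(\<sigma>^^l) (\<sigma> k) = a" using Suc.prems(2) by (simp only: funpow_Suc_right o_apply)
    moreover have "\<sigma> k \<in> edges G" using sig_in Suc.prems(1) by blast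
    ultimately obtain m where m: "m \<in> {1..n}" "(\<sigma>^^m) a = \<sigma> k" using Suc.IH by blast
    show ?case
    proof (cases "m = 1")
      case True
      then have "\<sigma> a = \<sigma> k" using m by simp
      then have "a = k" by (rule inj_onD[OF sig_inj _ a_in Suc.prems(1)])
      then show ?thesis using n1 by blast
    next
      case False
      then have m2: "m = Suc (m - 1)" "m - 1 \<in> {1..n}" using m by auto
      have "(\<sigma>^^m) a = (\<sigma>^^(Suc (m-1))) a" using m2(1) by simp
      also have "\<dots> = \<sigma> ((\<sigma>^^(m-1)) a)" by simp
      finally have "\<sigma> ((\<sigma>^^(m-1)) a) = \<sigma> k" using m(2) by simp
      moreover have "(\<sigma>^^(m-1)) a \<in> edges G" using funpow_in[OF sig_img a_in] by blast
      ultimately have "(\<sigma>^^(m-1)) a = k" using inj_onD[OF sig_inj] Suc.prems(1) by blast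
      then show ?thesis using m2 by blast
    qed
  qed
  from main[OF assms l] obtain m where "m \<in> {1..n}" "(\<sigma>^^m) a = k" by blast
  then show ?thesis using fst_xs[of m] by auto
qed

lemma cover: assumes "y \<in> oedges G" shows "\<exists>m\<in>{1..n}. y = xs m \<or> y = orev (xs m)"
proof -
  have "fst y \<in> edges G" using assms by (simp add: oedges_iff)
  from cover_edge[OF this] obtain m where m: "m \<in> {1..n}" "fst (xs m) = fst y" by blast
  then have "y = xs m \<or> y = orev (xs m)" using same_fst[of "xs m" y] by simp
  then show ?thesis using m(1) by blast
qed


lemma u_in: "u \<in> verts G" using oterm_in[OF e0_in] .
lemma w_in: "w \<in> verts G" using oterm_in[OF e1_in] .
lemma beta_img: "\<beta> ` verts G \<subseteq> verts G" using beta_in by auto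

definition B :: "nat \<Rightarrow> nat" where "B k = (\<beta>^^k) u"

lemma B_in: "B k \<in> verts G" unfolding B_def using funpow_in[OF beta_img u_in] .
lemma B_Suc: "B (Suc k) = \<beta> (B k)" by (simp add: B_def)
lemma B_0: "B 0 = u" by (simp add: B_def)

lemma ends0: "m \<in> {1..n} \<Longrightarrow> oinit G (xs m) = B m \<and> oterm G (xs m) = (\<beta>^^m) w"
proof (induction m)
  case 0 then show ?case by simp
next
  case (Suc m)
  show ?case
  proof (cases "m = 0")
    case True
    have "oinit G (xs 1) = \<beta> u" using init_step e1_in by (simp add: xs_def)
    moreover have "oterm G (xs 1) = \<beta> w" using term_step[OF e1_in] by (simp add: xs_def)
    ultimately show ?thesis using True by (simp add: B_def)
  next
    case False
    then have m: "m \<in> {1..n}" "0 < m" "m < n" using Suc.prems by auto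
    have ne: "xs m \<noteq> e1" "xs m \<noteq> orev e1" using xs_ne m(2,3) by auto
    have IH: "oinit G (xs m) = B m" "oterm G (xs m) = (\<beta>^^m) w" using Suc.IH m(1) by auto
    have "oinit G (xs (Suc m)) = \<beta> (oinit G (xs m))"
      using init_step xs_in[of m] ne by (simp add: xs_Suc)
    moreover have "oterm G (xs (Suc m)) = \<beta> (oterm G (xs m))"
      using term_step[OF xs_in[of m]] ne by (simp add: xs_Suc)
    ultimately show ?thesis using IH by (simp add: B_Suc)
  qed
qed

lemma B_per_ex: "\<exists>k. 0 < k \<and> B k = u"
  using funpow_periodic[OF finV beta_img beta_inj u_in] by (auto simp: B_def)

definition p :: nat where "p = (LEAST k. 0 < k \<and> B k = u)"

lemma p_pos: "0 < p" and B_p: "B p = u"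
  using LeastI_ex[OF B_per_ex] by (auto simp: p_def)

lemma p_least: "0 < k \<Longrightarrow> k < p \<Longrightarrow> B k \<noteq> u"
  using not_less_Least[of k "\<lambda>k. 0 < k \<and> B k = u"] by (auto simp: p_def)

lemma B_eq: "B i = B j \<longleftrightarrow> i mod p = j mod p"
  unfolding B_def
  by (rule funpow_period_eq[OF beta_img beta_inj u_in p_pos])
     (use B_p p_least in \<open>auto simp: B_def\<close>)

lemma B_dvd: "B i = B j \<longleftrightarrow> int p dvd int i - int j"
proof -
  have "i mod p = j mod p \<longleftrightarrow> int i mod int p = int j mod int p"
    by (metis of_nat_eq_iff zmod_int)
  also have "\<dots> \<longleftrightarrow> int p dvd int i - int j" by (rule mod_eq_dvd_iff)
  finally show ?thesis using B_eq by simp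
qed

lemma w_B: "\<exists>c. w = B c"
proof -
  have key: "\<exists>c. w = B c" if h: "B i = (\<beta>^^j) w" for i j
  proof -
    obtain q where q: "0 < q" "(\<beta>^^q) w = w"
      using funpow_periodic[OF finV beta_img beta_inj w_in] by blast
    have jq: "j \<le> q * j" using q(1) by (cases q) auto
    define d where "d = q * j - j"
    have qj: "q * j = d + j" using jq d_def by simp
    have "w = (\<beta>^^(q*j)) w" using funpow_mult_period[OF q(2), of j] by simp
    also have "\<dots> = (\<beta>^^(d + j)) w" by (simp only: qj)
    also have "\<dots> = (\<beta>^^d) ((\<beta>^^j) w)" by (simp only: funpow_add o_apply)
    also have "\<dots> = (\<beta>^^d) (B i)" using h by simp
    also have "\<dots> = B (d + i)" by (simp add: B_def funpow_add)
    finally show ?thesis by blast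
  qed
  obtain j where j: "j \<in> {1..n}" "e0 = xs j \<or> e0 = orev (xs j)" using cover[OF e0_in] by blast
  have ej: "oinit G (xs j) = B j" "oterm G (xs j) = (\<beta>^^j) w" using ends0 j(1) by auto
  have en: "oinit G (xs n) = B n" "oterm G (xs n) = (\<beta>^^n) w" using ends0 n_pos by auto
  show ?thesis
  proof (cases "e0 = xs j")
    case True
    then have "B 0 = (\<beta>^^j) w" using ej B_0 by simp
    then show ?thesis by (rule key)
  next
    case False
    then have e0j: "e0 = orev (xs j)" using j by blast
    then have vj: "v = (\<beta>^^j) w" using ej by (simp add: oinit_orev)
    show ?thesis
    proof (cases "xs n = e1")
      case True
      then have "B n = (\<beta>^^j) w" using en vj v_eq by simp
      then show ?thesis by (rule key)
    next
      case False
      then have "xs n = orev e1" using xs_n by blast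
      then have "B n = (\<beta>^^0) w" using en by (simp add: oinit_orev)
      then show ?thesis by (rule key)
    qed
  qed
qed

definition c :: nat where "c = (SOME c. w = B c)"
lemma w_c: "w = B c" unfolding c_def using someI_ex[OF w_B] .

lemma Bw: "(\<beta>^^k) w = B (k + c)"
  unfolding w_c B_def by (simp add: funpow_add)

lemma ends: "m \<in> {1..n} \<Longrightarrow> oinit G (xs m) = B m \<and> oterm G (xs m) = B (m + c)"
  using ends0 Bw by simp

lemma verts_B: assumes "y \<in> verts G" shows "\<exists>k. y = B k"
proof -
  have "3 \<le> card {x \<in> oedges G. oinit G x = y}" using val3 assms by (simp add: valence_def)
  then have "{x \<in> oedges G. oinit G x = y} \<noteq> {}" by (metis card.empty not_numeral_le_zero)
  then obtain x where x: "x \<in> oedges G" "oinit G x = y" by blast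
  obtain m where m: "m \<in> {1..n}" "x = xs m \<or> x = orev (xs m)" using cover[OF x(1)] by blast
  show ?thesis
  proof (cases "x = xs m")
    case True then show ?thesis using ends[OF m(1)] x(2) by auto
  next
    case False then have "x = orev (xs m)" using m by blast
    then show ?thesis using ends[OF m(1)] x(2) by (auto simp: oinit_orev)
  qed
qed


lemma edge_B: assumes "x \<in> oedges G"
  shows "\<exists>m. (oinit G x = B m \<and> oterm G x = B (m + c)) \<or> (oinit G x = B (m + c) \<and> oterm G x = B m)"
proof -
  obtain m where m: "m \<in> {1..n}" "x = xs m \<or> x = orev (xs m)" using cover[OF assms] by blast
  show ?thesis
  proof (cases "x = xs m")
    case True then show ?thesis using ends[OF m(1)] by auto
  next
    case False then have "x = orev (xs m)" using m by blast
    then show ?thesis using ends[OF m(1)] by (auto simp: oinit_orev oterm_orev)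
  qed
qed

lemma p_gcd: "p = 1 \<or> gcd c p = 1"
proof (cases "B 1 = u")
  case True
  then have "\<not> 1 < p" using p_least[of 1] by auto
  then show ?thesis using p_pos by simp
next
  case False
  define g where "g = gcd c p"
  define P where "P y = (\<exists>k. y = B k \<and> g dvd k)" for y
  have gp: "g dvd p" and gc: "g dvd c" by (simp_all add: g_def)
  have PB: "P (B m) \<longleftrightarrow> g dvd m" for m
  proof
    assume "P (B m)"
    then obtain k where k: "B m = B k" "g dvd k" by (auto simp: P_def)
    then have "m mod p = k mod p" using B_eq by blast
    moreover have "g dvd k mod p" using k(2) gp by (simp add: dvd_mod_iff)
    ultimately have "g dvd m mod p" by simp
    then show "g dvd m" using gp by (simp add: dvd_mod_iff)
  next
    assume "g dvd m" then show "P (B m)" by (auto simp: P_def)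
  qed
  have PBc: "P (B (m + c)) \<longleftrightarrow> P (B m)" for m
    using PB gc by (simp add: dvd_add_left_iff)
  have ex: "\<exists>ps. is_path G ps \<and> oinit G (hd ps) = u \<and> oterm G (last ps) = B 1"
    using conn u_in B_in[of 1] False unfolding connected_graph_def by metis
  then obtain ps where ps: "is_path G ps" "oinit G (hd ps) = u" "oterm G (last ps) = B 1" by blast
  have "\<forall>y\<in>set ps. P (oinit G y) = P (oterm G y)"
  proof
    fix y assume "y \<in> set ps"
    then have "y \<in> oedges G" using ps(1) unfolding is_path_def by auto
    then obtain m where "(oinit G y = B m \<and> oterm G y = B (m + c)) \<or> (oinit G y = B (m + c) \<and> oterm G y = B m)"
      using edge_B by blast
    then show "P (oinit G y) = P (oterm G y)" using PBc[of m] by auto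
  qed
  from path_inv[OF ps(1) this] have "P u = P (B 1)" using ps by simp
  moreover have "P u" using PB[of 0] B_0 by simp
  ultimately have "g dvd 1" using PB[of 1] by simp
  then show ?thesis by (simp add: g_def)
qed

lemma p3: assumes "p \<noteq> 1" shows "p = 3 \<and> n mod 3 = c mod 3 \<and> c mod 3 \<noteq> 0"
proof -
  have cop: "gcd c p = 1" using p_gcd assms by simp
  have npc: "\<not> int p dvd int c"
  proof
    assume "int p dvd int c"
    then have "p dvd c" by simp
    then have "p dvd gcd c p" by simp
    then show False using cop assms by simp
  qed
  obtain j where j: "j \<in> {1..n}" "e0 = xs j \<or> e0 = orev (xs j)" using cover[OF e0_in] by blast
  have ej: "oinit G (xs j) = B j" "oterm G (xs j) = B (j + c)" using ends j(1) by auto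
  have en: "oinit G (xs n) = B n" "oterm G (xs n) = B (n + c)" using ends n_pos by auto
  have v1: "oinit G e1 = v" by (rule v_eq)
  have "xs n = orev e1"
  proof (rule ccontr)
    assume "xs n \<noteq> orev e1"
    then have xn: "xs n = e1" using xs_n by blast
    have d0: "int p dvd int n" using en xn w_c B_dvd[of "n + c" c] by simp
    have bn: "B n = v" using en xn v1 by simp
    show False
    proof (cases "e0 = xs j")
      case True
      have d1: "int p dvd int j - int n" using ej True bn B_dvd[of j n] by simp
      have d2: "int p dvd int j + int c" using ej True B_0 B_dvd[of "j + c" 0] by simp
      have "int p dvd (int j + int c) - (int j - int n) - int n" by (rule dvd_diff[OF dvd_diff[OF d2 d1] d0])
      then show False using npc by simp
    next
      case False
      then have e0j: "e0 = orev (xs j)" using j by blast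
      have d1: "int p dvd int j + int c - int n" using ej e0j bn B_dvd[of "j + c" n] by (simp add: oinit_orev)
      have d2: "int p dvd int j" using ej e0j B_0 B_dvd[of j 0] by (simp add: oterm_orev)
      have "int p dvd (int j + int c - int n) - int j + int n" by (rule dvd_add[OF dvd_diff[OF d1 d2] d0])
      then show False using npc by simp
    qed
  qed
  then have bnc: "B n = B c" and bv: "B (n + c) = v" using en w_c by (simp_all add: oinit_orev oterm_orev v1)
  have dnc: "int p dvd int n - int c" using bnc B_dvd by simp
  have d3: "int p dvd 3 * int c"
  proof (cases "e0 = xs j")
    case True
    have d1: "int p dvd int j - (int n + int c)" using ej True bv B_dvd[of j "n + c"] by simp
    have d2: "int p dvd int j + int c" using ej True B_0 B_dvd[of "j + c" 0] by simp
    have "int p dvd (int j + int c) - (int j - (int n + int c)) - (int n - int c)"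
      by (rule dvd_diff[OF dvd_diff[OF d2 d1] dnc])
    then show ?thesis by (simp add: algebra_simps)
  next
    case False
    then have e0j: "e0 = orev (xs j)" using j by blast
    have d1: "int p dvd (int j + int c) - (int n + int c)" using ej e0j bv B_dvd[of "j + c" "n + c"] by (simp add: oinit_orev)
    have d2: "int p dvd int j" using ej e0j B_0 B_dvd[of j 0] by (simp add: oterm_orev)
    have "int p dvd int j - ((int j + int c) - (int n + int c)) - (int n - int c)" by (rule dvd_diff[OF dvd_diff[OF d2 d1] dnc])
    then have "int p dvd int c" by simp
    then show ?thesis using npc by simp
  qed
  then have "int p dvd int (3 * c)" by simp
  then have "p dvd 3 * c" by (simp only: int_dvd_int_iff)
  moreover have "coprime p c" using cop by (simp add: coprime_iff_gcd_eq_1 gcd.commute)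
  ultimately have "p dvd 3" using coprime_dvd_mult_left_iff by blast
  then have "p \<le> 3" using dvd_imp_le by simp
  then have "p = 1 \<or> p = 2 \<or> p = 3" using p_pos by auto
  then have p3: "p = 3" using \<open>p dvd 3\<close> assms by auto
  have "n mod 3 = c mod 3" using bnc B_eq p3 by simp
  moreover have "c mod 3 \<noteq> 0"
  proof
    assume "c mod 3 = 0"
    then have "3 dvd c" by (simp add: dvd_eq_mod_eq_0)
    then have "p dvd c" using p3 by simp
    then have "int p dvd int c" by simp
    then show False using npc by simp
  qed
  ultimately show ?thesis using p3 by simp
qed


lemma EG: "edges G = (\<lambda>m. fst (xs m)) ` {1..n}"
proof
  show "edges G \<subseteq> (\<lambda>m. fst (xs m)) ` {1..n}" using cover_edge by force
  show "(\<lambda>m. fst (xs m)) ` {1..n} \<subseteq> edges G" using xs_in by (auto simp: oedges_iff)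
qed

lemma cardE: "card (edges G) = n"
proof -
  have "inj_on (\<lambda>m. fst (xs m)) {1..n}" using xs_inj by (auto intro: inj_onI)
  then show ?thesis unfolding EG by (simp add: card_image)
qed

lemma rose_case: assumes "p = 1" shows "isomorphic G (rose n) \<and> rank G = int n"
proof -
  have Bu: "B k = u" for k
  proof -
    have "k mod p = 0 mod p" using assms by simp
    then have "B k = B 0" using B_eq[of k 0] by blast
    then show ?thesis using B_0 by simp
  qed
  have V: "verts G = {u}"
  proof
    show "verts G \<subseteq> {u}"
    proof
      fix y assume "y \<in> verts G"
      then obtain k where "y = B k" using verts_B by blast
      then show "y \<in> {u}" using Bu[of k] by simp
    qed
    show "{u} \<subseteq> verts G" using u_in by simp
  qed
  have iso: "isomorphic G (rose n)"
  proof (rule iso_build[where \<psi> = "\<lambda>_. 0" and Xe = xs and Ye = "\<lambda>m. (m - 1, True)" and N = n])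
    show "finite (edges (rose n))" by (simp add: rose_def polygonal_def)
    show "bij_betw (\<lambda>_. 0) (verts G) (verts (rose n))" unfolding V
      by (simp add: rose_def polygonal_def bij_betw_def)
    show "\<And>m. m \<in> {1..n} \<Longrightarrow> xs m \<in> oedges G" using xs_in by blast
    show "\<And>i j. i \<in> {1..n} \<Longrightarrow> j \<in> {1..n} \<Longrightarrow> fst (xs i) = fst (xs j) \<Longrightarrow> i = j" by (rule xs_inj)
    show "\<And>y. y \<in> oedges G \<Longrightarrow> \<exists>m\<in>{1..n}. y = xs m \<or> y = orev (xs m)" by (rule cover)
    show "\<And>m. m \<in> {1..n} \<Longrightarrow> (m - 1, True) \<in> oedges (rose n)"
      by (auto simp: rose_def polygonal_def oedges_def)
    show "\<And>i j. i \<in> {1..n} \<Longrightarrow> j \<in> {1..n} \<Longrightarrow> fst (i - 1, True) = fst (j - 1, True) \<Longrightarrow> i = j"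
      by auto
    show "card (edges (rose n)) = n" by (simp add: rose_def polygonal_def)
    fix m assume m: "m \<in> {1..n}"
    have "(m - 1) div n = 0" using m by auto
    then show "oinit (rose n) (m - 1, True) = 0 \<and> oterm (rose n) (m - 1, True) = 0"
      by (simp add: rose_def polygonal_def oterm_def oinit_def orev_def)
  qed
  have "rank G = int n" unfolding rank_def using cardE V by simp
  then show ?thesis using iso by simp
qed


lemma tri_case: assumes "p \<noteq> 1"
  shows "(\<exists>q\<ge>2. isomorphic G (delta_plus q) \<and> rank G = 3 * int q - 1) \<or>
         (\<exists>k\<ge>2. isomorphic G (delta_minus k) \<and> rank G = 3 * int k - 3)"
proof -
  have p: "p = 3" and nc: "n mod 3 = c mod 3" and c0: "c mod 3 \<noteq> 0" using p3[OF assms] by auto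
  have Bm: "B i = B j \<longleftrightarrow> i mod 3 = j mod 3" for i j using B_eq[of i j] p by simp
  have Bmod: "B k = B (k mod 3)" for k using Bm by simp
  have d01: "B 0 \<noteq> B 1" and d02: "B 0 \<noteq> B 2" and d12: "B 1 \<noteq> B 2" using Bm by auto
  have V: "verts G = {B 0, B 1, B 2}"
  proof
    show "verts G \<subseteq> {B 0, B 1, B 2}"
    proof
      fix y assume "y \<in> verts G"
      then obtain k where k: "y = B k" using verts_B by blast
      have "k mod 3 = 0 \<or> k mod 3 = 1 \<or> k mod 3 = 2" by (rule mod3_3)
      then show "y \<in> {B 0, B 1, B 2}" using k Bmod[of k] by auto
    qed
    show "{B 0, B 1, B 2} \<subseteq> verts G" using B_in by auto
  qed
  define \<psi> where "\<psi> y = (if y = B 0 then 1 else if y = B 1 then 2 else (0::nat))" for y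
  have psiB: "\<psi> (B k) = (k + 1) mod 3" for k
  proof -
    have "k mod 3 = 0 \<or> k mod 3 = 1 \<or> k mod 3 = 2" by (rule mod3_3)
    then show ?thesis
    proof (elim disjE)
      assume h: "k mod 3 = 0"
      then have "B k = B 0" using Bm by simp
      moreover have "(k + 1) mod 3 = 1"
      proof -
        have "(k + 1) mod 3 = (k mod 3 + 1) mod 3" by (rule mod_add_left_eq[symmetric])
        also have "\<dots> = 1" using h by simp
        finally show ?thesis .
      qed
      ultimately show ?thesis by (simp add: \<psi>_def)
    next
      assume h: "k mod 3 = 1"
      then have "B k = B 1" using Bm by simp
      moreover have "(k + 1) mod 3 = 2"
      proof -
        have "(k + 1) mod 3 = (k mod 3 + 1) mod 3" by (rule mod_add_left_eq[symmetric])
        also have "\<dots> = 2" using h by simp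
        finally show ?thesis .
      qed
      ultimately show ?thesis using d01 by (simp add: \<psi>_def)
    next
      assume h: "k mod 3 = 2"
      then have "B k = B 2" using Bm by simp
      moreover have "(k + 1) mod 3 = 0"
      proof -
        have "(k + 1) mod 3 = (k mod 3 + 1) mod 3" by (rule mod_add_left_eq[symmetric])
        also have "\<dots> = 0" using h by simp
        finally show ?thesis .
      qed
      ultimately show ?thesis using d02 d12 by (simp add: \<psi>_def)
    qed
  qed
  have p0: "\<psi> (B 0) = 1" and p1: "\<psi> (B 1) = 2" and p2: "\<psi> (B 2) = 0" using psiB[of 0] psiB[of 1] psiB[of 2] by simp_all
  have psi_bij: "bij_betw \<psi> (verts G) {0..<3}"
  proof -
    have "inj_on \<psi> {B 0, B 1, B 2}" unfolding inj_on_def using p0 p1 p2 by auto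
    moreover have "\<psi> ` {B 0, B 1, B 2} = {0..<3}" using p0 p1 p2 by auto
    ultimately show ?thesis unfolding V bij_betw_def by blast
  qed
  have cardV: "card (verts G) = 3" unfolding V using d01 d02 d12 by simp
  have rk: "rank G = int n - 2" unfolding rank_def using cardE cardV by simp
  have endsm: "oinit G (xs m) = B m \<and> oterm G (xs m) = B (m + c mod 3)" if "m \<in> {1..n}" for m
  proof -
    have "(m + c) mod 3 = (m + c mod 3) mod 3" by (simp add: mod_add_right_eq)
    then show ?thesis using ends[OF that] Bm by simp
  qed
  have val0: "valence G (B 0) \<le> card {m\<in>{1..n}. m mod 3 = 0} + card {m\<in>{1..n}. (m + c mod 3) mod 3 = 0}"
  proof -
    let ?S1 = "{m\<in>{1..n}. m mod 3 = 0}" and ?S2 = "{m\<in>{1..n}. (m + c mod 3) mod 3 = 0}"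
    have sub: "{x \<in> oedges G. oinit G x = B 0} \<subseteq> xs ` ?S1 \<union> (\<lambda>m. orev (xs m)) ` ?S2"
    proof
      fix x assume x: "x \<in> {x \<in> oedges G. oinit G x = B 0}"
      then obtain m where m: "m \<in> {1..n}" "x = xs m \<or> x = orev (xs m)" using cover by blast
      show "x \<in> xs ` ?S1 \<union> (\<lambda>m. orev (xs m)) ` ?S2"
      proof (cases "x = xs m")
        case True
        then have "B m = B 0" using x endsm[OF m(1)] by simp
        then have "m \<in> ?S1" using m(1) Bm by simp
        then show ?thesis using True by (intro UnI1 image_eqI[of x xs m]) simp_all
      next
        case False
        then have xm: "x = orev (xs m)" using m by blast
        then have "B (m + c mod 3) = B 0" using x endsm[OF m(1)] by (simp add: oinit_orev)
        then have "m \<in> ?S2" using m(1) Bm by simp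
        then show ?thesis using xm by (intro UnI2 image_eqI[of x "\<lambda>m. orev (xs m)" m]) simp_all
      qed
    qed
    have "valence G (B 0) \<le> card (xs ` ?S1 \<union> (\<lambda>m. orev (xs m)) ` ?S2)"
      unfolding valence_def by (rule card_mono[OF _ sub]) simp
    also have "\<dots> \<le> card (xs ` ?S1) + card ((\<lambda>m. orev (xs m)) ` ?S2)" by (rule card_Un_le)
    also have "\<dots> \<le> card ?S1 + card ?S2" by (intro add_mono card_image_le) simp_all
    finally show ?thesis .
  qed
  have v3: "3 \<le> valence G (B 0)" using val3 B_in by blast
  have "c mod 3 = 1 \<or> c mod 3 = 2" using mod3_cases[OF c0] .
  then show ?thesis
  proof
    assume c1: "c mod 3 = 1"
    obtain q where nq: "n = 3 * q + 1" using mod3_ex1[of n] nc c1 by auto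
    have q2: "2 \<le> q"
    proof (rule ccontr)
      assume "\<not> 2 \<le> q"
      then have n4: "n \<le> 4" using nq by simp
      have ss1: "{m\<in>{1..n}. m mod 3 = 0} \<subseteq> {3}" using small_a[OF n4] .
      have s1: "card {m\<in>{1..n}. m mod 3 = 0} \<le> 1" using card_mono[OF _ ss1] by simp
      have ss2: "{m\<in>{1..n}. (m + c mod 3) mod 3 = 0} \<subseteq> {2}" using small_b[OF n4] c1 by simp
      have s2: "card {m\<in>{1..n}. (m + c mod 3) mod 3 = 0} \<le> 1" using card_mono[OF _ ss2] by simp
      show False using val0 v3 s1 s2 by linarith
    qed
    have iso: "isomorphic G (delta_plus q)"
    proof (rule iso_build[where \<psi> = \<psi> and Xe = xs and Ye = "\<lambda>m. ((m+1) mod 3 * (q+1) + (m-1) div 3, True)" and N = n])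
      show "finite (edges (delta_plus q))" by (simp add: delta_plus_def polygonal_def)
      show "bij_betw \<psi> (verts G) (verts (delta_plus q))" using psi_bij by (simp add: delta_plus_def polygonal_def)
      show "\<And>m. m \<in> {1..n} \<Longrightarrow> xs m \<in> oedges G" using xs_in by blast
      show "\<And>i j. i \<in> {1..n} \<Longrightarrow> j \<in> {1..n} \<Longrightarrow> fst (xs i) = fst (xs j) \<Longrightarrow> i = j" by (rule xs_inj)
      show "\<And>y. y \<in> oedges G \<Longrightarrow> \<exists>m\<in>{1..n}. y = xs m \<or> y = orev (xs m)" by (rule cover)
      show "\<And>m. m \<in> {1..n} \<Longrightarrow> ((m+1) mod 3 * (q+1) + (m-1) div 3, True) \<in> oedges (delta_plus q)"
      proof -
        fix m assume "m \<in> {1..n}"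
        then have m: "1 \<le> m" "m \<le> 3*q+1" using nq by auto
        show "((m+1) mod 3 * (q+1) + (m-1) div 3, True) \<in> oedges (delta_plus q)"
          using dp_arith[OF m] by (simp add: delta_plus_def polygonal_def oedges_def)
      qed
      show "\<And>i j. i \<in> {1..n} \<Longrightarrow> j \<in> {1..n} \<Longrightarrow> fst ((i+1) mod 3 * (q+1) + (i-1) div 3, True) = fst ((j+1) mod 3 * (q+1) + (j-1) div 3, True) \<Longrightarrow> i = j"
        using dp_inj nq by auto
      have "card ({0..<3 * (q + 1)} - {q, 2 * q + 1}) = 3 * (q+1) - 2"
        by (subst card_Diff_subset) auto
      then show "card (edges (delta_plus q)) = n" using nq by (simp add: delta_plus_def polygonal_def)
      fix m assume "m \<in> {1..n}"
      then have m: "1 \<le> m" "m \<le> 3*q+1" "m \<in> {1..n}" using nq by auto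
      have dv: "((m+1) mod 3 * (q+1) + (m-1) div 3) div (q+1) = (m+1) mod 3"
        using divK[OF dp_arith(1)[OF m(1,2)]] by blast
      have e: "oinit G (xs m) = B m" "oterm G (xs m) = B (m + 1)" using endsm[OF m(3)] c1 by auto
      have "((m+1) mod 3 + 1) mod 3 = (m + 1 + 1) mod 3" by (rule mod_add_left_eq)
      then show "oinit (delta_plus q) ((m+1) mod 3 * (q+1) + (m-1) div 3, True) = \<psi> (oinit G (xs m)) \<and>
                 oterm (delta_plus q) ((m+1) mod 3 * (q+1) + (m-1) div 3, True) = \<psi> (oterm G (xs m))"
        using e dv psiB by (simp add: delta_plus_def polygonal_def oterm_def oinit_def orev_def)
    qed
    have "rank G = 3 * int q - 1" using rk nq by simp
    then show ?thesis using iso q2 by blast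
  next
    assume c2: "c mod 3 = 2"
    obtain q where nq: "n = 3 * q + 2" using mod3_ex2[of n] nc c2 by auto
    have q1: "1 \<le> q"
    proof (rule ccontr)
      assume "\<not> 1 \<le> q"
      then have n2: "n = 2" using nq by simp
      have s0: "{m\<in>{1..n}. m mod 3 = 0} = {}" using small_c[of n] n2 by simp
      have ss2: "{m\<in>{1..n}. (m + c mod 3) mod 3 = 0} \<subseteq> {1}" using small_d[of n] n2 c2 by simp
      have s2: "card {m\<in>{1..n}. (m + c mod 3) mod 3 = 0} \<le> 1" using card_mono[OF _ ss2] by simp
      have s1: "card {m\<in>{1..n}. m mod 3 = 0} = 0" unfolding s0 by (rule card.empty)
      show False using val0 v3 s1 s2 by linarith
    qed
    have iso: "isomorphic G (delta_minus (q+1))"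
    proof (rule iso_build[where \<psi> = \<psi> and Xe = xs and Ye = "\<lambda>m. (m mod 3 * (q+1) + (m-1) div 3, False)" and N = n])
      show "finite (edges (delta_minus (q+1)))" by (simp add: delta_minus_def polygonal_def)
      show "bij_betw \<psi> (verts G) (verts (delta_minus (q+1)))" using psi_bij by (simp add: delta_minus_def polygonal_def)
      show "\<And>m. m \<in> {1..n} \<Longrightarrow> xs m \<in> oedges G" using xs_in by blast
      show "\<And>i j. i \<in> {1..n} \<Longrightarrow> j \<in> {1..n} \<Longrightarrow> fst (xs i) = fst (xs j) \<Longrightarrow> i = j" by (rule xs_inj)
      show "\<And>y. y \<in> oedges G \<Longrightarrow> \<exists>m\<in>{1..n}. y = xs m \<or> y = orev (xs m)" by (rule cover)
      show "\<And>m. m \<in> {1..n} \<Longrightarrow> (m mod 3 * (q+1) + (m-1) div 3, False) \<in> oedges (delta_minus (q+1))"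
      proof -
        fix m assume "m \<in> {1..n}"
        then have m: "1 \<le> m" "m \<le> 3*q+2" using nq by auto
        show "(m mod 3 * (q+1) + (m-1) div 3, False) \<in> oedges (delta_minus (q+1))"
          using dm_arith[OF m] by (simp add: delta_minus_def polygonal_def oedges_def)
      qed
      show "\<And>i j. i \<in> {1..n} \<Longrightarrow> j \<in> {1..n} \<Longrightarrow> fst (i mod 3 * (q+1) + (i-1) div 3, False) = fst (j mod 3 * (q+1) + (j-1) div 3, False) \<Longrightarrow> i = j"
        using dm_inj nq by auto
      have "card ({0..<3 * (q + 1)} - {q}) = 3 * (q+1) - 1"
        by (subst card_Diff_subset) auto
      then show "card (edges (delta_minus (q+1))) = n" using nq by (simp add: delta_minus_def polygonal_def)
      fix m assume "m \<in> {1..n}"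
      then have m: "1 \<le> m" "m \<le> 3*q+2" "m \<in> {1..n}" using nq by auto
      have dv: "(m mod 3 * (q+1) + (m-1) div 3) div (q+1) = m mod 3"
        using divK[OF dm_arith(1)[OF m(1,2)]] by blast
      have e: "oinit G (xs m) = B m" "oterm G (xs m) = B (m + 2)" using endsm[OF m(3)] c2 by auto
      have "(m mod 3 + 1) mod 3 = (m + 1) mod 3" by (rule mod_add_left_eq)
      moreover have "(m + 2 + 1) mod 3 = m mod 3" by simp
      ultimately show "oinit (delta_minus (q+1)) (m mod 3 * (q+1) + (m-1) div 3, False) = \<psi> (oinit G (xs m)) \<and>
                 oterm (delta_minus (q+1)) (m mod 3 * (q+1) + (m-1) div 3, False) = \<psi> (oterm G (xs m))"
        using e dv psiB by (simp add: delta_minus_def polygonal_def oterm_def oinit_def orev_def)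
    qed
    have "rank G = 3 * int (q+1) - 3" using rk nq by simp
    moreover have "2 \<le> q + 1" using q1 by simp
    ultimately show ?thesis using iso by blast
  qed
qed

theorem classify:
  "(isomorphic G (rose n) \<and> rank G = int n) \<or>
   (\<exists>q\<ge>2. isomorphic G (delta_plus q) \<and> rank G = 3 * int q - 1) \<or>
   (\<exists>k\<ge>2. isomorphic G (delta_minus k) \<and> rank G = 3 * int k - 3)"
  using rose_case tri_case by blast

end


lemma mat_pow_closed:
  assumes kC: "k \<in> C" and cl: "\<forall>i\<in>C. \<forall>j. i \<in> I \<longrightarrow> 0 < A i j \<longrightarrow> j \<in> C"
  shows "0 < mat_pow I A m k j \<Longrightarrow> j \<in> C"
proof (induction m arbitrary: j)
  case 0
  then have "k = j" by (simp split: if_splits)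
  then show ?case using kC by simp
next
  case (Suc m)
  have pos: "0 < (\<Sum>i\<in>I. mat_pow I A m k i * A i j)" using Suc.prems by simp
  have "\<exists>i\<in>I. 0 < mat_pow I A m k i * A i j"
  proof (rule ccontr)
    assume "\<not> (\<exists>i\<in>I. 0 < mat_pow I A m k i * A i j)"
    then have "\<forall>i\<in>I. mat_pow I A m k i * A i j = 0" by auto
    then have "(\<Sum>i\<in>I. mat_pow I A m k i * A i j) = 0" by (rule sum.neutral)
    then show False using pos by simp
  qed
  then obtain i where i: "i \<in> I" "0 < mat_pow I A m k i" "0 < A i j" by auto
  have "i \<in> C" using Suc.IH i(2) by blast
  then show ?case using cl i(1,3) by blast
qed

lemma reach_lemma:
  assumes irr: "irreducible_matrix E A" and sin: "\<forall>i\<in>E. \<sigma> i \<in> E"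
    and step: "\<forall>i\<in>E. i \<noteq> a \<longrightarrow> (\<forall>j. 0 < A i j \<longrightarrow> j = \<sigma> i)" and aE: "a \<in> E"
  shows "\<forall>k\<in>E. \<exists>l. (\<sigma>^^l) k = a"
proof
  fix k assume k: "k \<in> E"
  show "\<exists>l. (\<sigma>^^l) k = a"
  proof (rule ccontr)
    assume nk: "\<not> (\<exists>l. (\<sigma>^^l) k = a)"
    define C where "C = range (\<lambda>l. (\<sigma>^^l) k)"
    have kC: "k \<in> C" unfolding C_def by (rule range_eqI[of _ _ 0]) simp
    have cl: "\<forall>i\<in>C. \<forall>j. i \<in> E \<longrightarrow> 0 < A i j \<longrightarrow> j \<in> C"
    proof (intro ballI allI impI)
      fix i j assume iC: "i \<in> C" and iE: "i \<in> E" and A: "0 < A i j"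
      obtain l where l: "i = (\<sigma>^^l) k" using iC unfolding C_def by blast
      have "i \<noteq> a" using nk l by blast
      then have "j = \<sigma> i" using step iE A by blast
      then have "j = (\<sigma>^^(Suc l)) k" using l by simp
      then show "j \<in> C" unfolding C_def by blast
    qed
    obtain m where "0 < m" "0 < mat_pow E A m k a" using irr k aE unfolding irreducible_matrix_def by blast
    then have "a \<in> C" using mat_pow_closed[OF kC cl] by blast
    then show False using nk unfolding C_def by blast
  qed
qed

lemma oinit_set_oinit: "oinit (set_oinit G e v) x = (if x = e then v else oinit G x)"
  by (cases e; cases x) (auto simp: set_oinit_def oinit_def)

lemma set_oinit_simps[simp]: "verts (set_oinit G e v) = verts G" "edges (set_oinit G e v) = edges G"
  by (simp_all add: set_oinit_def)

lemma len1: "length xs = 1 \<Longrightarrow> xs = [hd xs]" by (cases xs) auto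

lemma main_disj:
  fixes G :: graph and f :: gmap
  assumes wf: "wf_graph G" and conn: "connected_graph G"
    and irr: "irreducible_map G f"
    and sfd: "single_fold_decomp G f"
  shows "(\<exists>N. isomorphic G (rose N) \<and> rank G = int N) \<or>
         (\<exists>q\<ge>2. isomorphic G (delta_plus q) \<and> rank G = 3 * int q - 1) \<or>
         (\<exists>k\<ge>2. isomorphic G (delta_minus k) \<and> rank G = 3 * int k - 3)"
proof -
  obtain H \<phi> h where fold: "is_fold G H \<phi>" and iso: "graph_iso H G h" and meq: "map_eq G f (gcomp h \<phi>)"
    using sfd unfolding single_fold_decomp_def by blast
  obtain e0 e1 where pre: "fold_precond G e0 e1" and cs:
    "(H = full_fold_graph G e0 e1 \<and> \<phi> = full_fold_map e0 e1) \<or>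
     (H = complete_fold_graph G e0 e1 \<and> \<phi> = complete_fold_map G e0 e1) \<or>
     (\<exists>w n. w \<notin> verts G \<and> n \<notin> edges G \<and> H = partial_fold_graph G e0 e1 w n \<and> \<phi> = partial_fold_map e0 e1 n)"
    using fold unfolding is_fold_def by blast
  have finE: "finite (edges G)" using wf by (simp add: wf_graph_def)
  have e1E: "fst e1 \<in> edges G" using pre by (simp add: fold_precond_def oedges_iff)
  have bijO: "bij_betw (\<lambda>x. hd (emap h x)) (oedges H) (oedges G)" using iso by (simp add: graph_iso_def)
  have cardO: "card (oedges H) = card (oedges G)" using bij_betw_same_card[OF bijO] .
  have full: "H = full_fold_graph G e0 e1 \<and> \<phi> = full_fold_map e0 e1"
  proof -
    have "\<not> (H = complete_fold_graph G e0 e1)"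
    proof
      assume "H = complete_fold_graph G e0 e1"
      then have eH: "edges H = edges G - {fst e1}" by (simp add: complete_fold_graph_def)
      have fH: "finite (edges H)" using eH finE by simp
      have "card (edges H) = card (edges G) - 1" using eH e1E finE by simp
      moreover have "card (edges G) > 0" using e1E finE card_gt_0_iff by blast
      ultimately show False using cardO card_oedges[OF fH] card_oedges[OF finE] by simp
    qed
    moreover have "\<not> (\<exists>w n. w \<notin> verts G \<and> n \<notin> edges G \<and> H = partial_fold_graph G e0 e1 w n)"
    proof
      assume "\<exists>w n. w \<notin> verts G \<and> n \<notin> edges G \<and> H = partial_fold_graph G e0 e1 w n"
      then obtain w n where wn: "n \<notin> edges G" "H = partial_fold_graph G e0 e1 w n" by blast
      then have eH: "edges H = insert n (edges G)" by (simp add: partial_fold_graph_def Let_def)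
      have fH: "finite (edges H)" using eH finE by simp
      have "card (edges H) = card (edges G) + 1" using eH wn(1) finE by simp
      then show False using cardO card_oedges[OF fH] card_oedges[OF finE] by simp
    qed
    ultimately show ?thesis using cs by blast
  qed
  then have HG: "H = set_oinit G e1 (oterm G e0)" and phi: "\<phi> = full_fold_map e0 e1"
    by (simp_all add: full_fold_graph_def)
  have VH: "verts H = verts G" and EH: "edges H = edges G" and OH: "oedges H = oedges G"
    using HG by (simp_all add: oedges_def)
  have initH: "oinit H x = (if x = e1 then oterm G e0 else oinit G x)" for x
    using HG oinit_set_oinit by simp
  define \<tau> where "\<tau> x = hd (emap h x)" for x
  define \<beta> where "\<beta> = vmap h"
  have gm: "graph_map H G h" using iso by (simp add: graph_iso_def)
  have len: "\<And>x. x \<in> oedges G \<Longrightarrow> emap h x = [\<tau> x]"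
    using iso OH len1 unfolding graph_iso_def \<tau>_def by metis
  have bijV: "bij_betw \<beta> (verts G) (verts G)" using iso VH by (simp add: graph_iso_def \<beta>_def)
  have bijT: "bij_betw \<tau> (oedges G) (oedges G)" using bijO OH unfolding \<tau>_def by simp
  have FS: "fsetup G \<tau> \<beta> e0 e1"
  proof (unfold_locales)
    show "wf_graph G" by fact
    show "connected_graph G" by fact
    show "\<forall>v\<in>verts G. 3 \<le> valence G v" using irr by (simp add: irreducible_map_def)
    show "fold_precond G e0 e1" by fact
    show "\<forall>x\<in>oedges G. \<tau> x \<in> oedges G" using bij_betw_apply[OF bijT] by blast
    show "inj_on \<tau> (oedges G)" using bijT unfolding bij_betw_def by blast
    show "\<forall>x\<in>oedges G. \<tau> (orev x) = orev (\<tau> x)"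
    proof
      fix x assume x: "x \<in> oedges G"
      have "emap h (orev x) = rev_path (emap h x)" using gm x OH unfolding graph_map_def by blast
      then have "emap h (orev x) = [orev (\<tau> x)]" using len[OF x] by (simp add: rev_path_def)
      moreover have "\<tau> (orev x) = hd (emap h (orev x))" by (simp add: \<tau>_def)
      ultimately show "\<tau> (orev x) = orev (\<tau> x)" by simp
    qed
    show "\<forall>v\<in>verts G. \<beta> v \<in> verts G" using bij_betw_apply[OF bijV] by blast
    show "inj_on \<beta> (verts G)" using bijV unfolding bij_betw_def by blast
    show "\<forall>x\<in>oedges G. oinit G (\<tau> x) = \<beta> (if x = e1 then oterm G e0 else oinit G x)"
    proof
      fix x assume x: "x \<in> oedges G"
      have "oinit G (hd (emap h x)) = vmap h (oinit H x)" using gm x OH unfolding graph_map_def by blast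
      then show "oinit G (\<tau> x) = \<beta> (if x = e1 then oterm G e0 else oinit G x)"
        unfolding \<tau>_def \<beta>_def using initH by simp
    qed
    show "\<forall>k\<in>edges G. \<exists>l. (sig \<tau> ^^ l) k = fst e1"
    proof (rule reach_lemma[where A = "trans_mat f"])
      show "irreducible_matrix (edges G) (trans_mat f)" using irr by (simp add: irreducible_map_def)
      show "\<forall>i\<in>edges G. sig \<tau> i \<in> edges G"
      proof
        fix i assume "i \<in> edges G"
        then have "(i, True) \<in> oedges G" by (simp add: oedges_iff)
        then have "\<tau> (i, True) \<in> oedges G" by (rule bij_betw_apply[OF bijT])
        then show "sig \<tau> i \<in> edges G" by (simp add: sig_def oedges_iff)
      qed
      show "fst e1 \<in> edges G" by (rule e1E)
      show "\<forall>i\<in>edges G. i \<noteq> fst e1 \<longrightarrow> (\<forall>j. 0 < trans_mat f i j \<longrightarrow> j = sig \<tau> i)"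
      proof (intro ballI impI allI)
        fix i j assume iE: "i \<in> edges G" and ia: "i \<noteq> fst e1" and pos: "0 < trans_mat f i j"
        have x: "(i, True) \<in> oedges G" using iE by (simp add: oedges_iff)
        have ne1: "(i,True) \<noteq> e1" using ia by auto
        have ne2: "(i,True) \<noteq> orev e1"
        proof
          assume "(i,True) = orev e1"
          then have "fst (i,True) = fst (orev e1)" by (rule arg_cong)
          then show False using ia by simp
        qed
        note ne = ne1 ne2
        have "emap f (i,True) = concat (map (emap h) (emap \<phi> (i,True)))"
          using meq x unfolding map_eq_def gcomp_def by simp
        also have "emap \<phi> (i,True) = [(i,True)]" using ne phi by (simp add: full_fold_map_def)
        finally have "emap f (i,True) = [\<tau> (i,True)]" using len[OF x] by simp
        then have "0 < count_list [\<tau> (i,True)] (j, True) + count_list [\<tau> (i,True)] (j, False)"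
          using pos unfolding trans_mat_def by simp
        then have "\<tau> (i,True) = (j,True) \<or> \<tau> (i,True) = (j,False)" by (auto split: if_splits)
        then show "j = sig \<tau> i" unfolding sig_def by auto
      qed
    qed
  qed
  show ?thesis using fsetup.classify[OF FS] by blast
qed

theorem theoremC:
  fixes G :: graph and f :: gmap and r :: nat
  assumes "wf_graph G" and "connected_graph G" and "rank G = int r"
    and "graph_map G G f" and "irreducible_map G f"
    and "homotopy_equivalence G G f"
    and "single_fold_decomp G f"
  shows "(isomorphic G (rose r) \<or>
          (\<exists>k\<ge>2. isomorphic G (delta_minus k) \<or> isomorphic G (delta_plus k)))
       \<and> (r mod 3 = 0 \<longrightarrow> isomorphic G (rose r) \<or>
            (\<exists>k\<ge>2. 3 * k - 3 = r \<and> isomorphic G (delta_minus k)))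
       \<and> (r mod 3 = 1 \<longrightarrow> isomorphic G (rose r))
       \<and> (r mod 3 = 2 \<longrightarrow> isomorphic G (rose r) \<or>
            (\<exists>k\<ge>2. 3 * k - 1 = r \<and> isomorphic G (delta_plus k)))"
proof -
  have D: "(\<exists>N. isomorphic G (rose N) \<and> rank G = int N) \<or>
         (\<exists>q\<ge>2. isomorphic G (delta_plus q) \<and> rank G = 3 * int q - 1) \<or>
         (\<exists>k\<ge>2. isomorphic G (delta_minus k) \<and> rank G = 3 * int k - 3)"
    using main_disj[OF assms(1,2,5,7)] .
  then show ?thesis
  proof (elim disjE exE conjE)
    fix N assume i: "isomorphic G (rose N)" and rk: "rank G = int N"
    then have "N = r" using assms(3) by simp
    then show ?thesis using i by simp
  next
    fix q assume q: "2 \<le> q" and i: "isomorphic G (delta_plus q)" and rk: "rank G = 3 * int q - 1"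
    have r: "3 * q - 1 = r" using rk assms(3) q by linarith
    have "r mod 3 = 2" using mod3_plus[OF q] r by simp
    then show ?thesis using i q r by auto
  next
    fix k assume k: "2 \<le> k" and i: "isomorphic G (delta_minus k)" and rk: "rank G = 3 * int k - 3"
    have r: "3 * k - 3 = r" using rk assms(3) k by linarith
    have "r mod 3 = 0" using mod3_minus[OF k] r by simp
    then show ?thesis using i k r by auto
  qed
qed

end
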